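(* Let $\gamma\in\mathcal{M}_k\otimes\mathcal{M}_m$ be a state. Then $\gamma\in CR_{k,m}$ if and only if for every pair of orthogonal projections $W\in\mathcal{M}_k$, $V\in\mathcal{M}_m$ the following two conditions are equivalent: (a) $\mathrm{tr}(\gamma(W\otimes V^\perp))=\mathrm{tr}(\gamma(W^\perp\otimes V))=0$; (b) $\gamma=(W\otimes V)\gamma(W\otimes V)+(W^\perp\otimes V^\perp)\gamma(W^\perp\otimes V^\perp)$.
   Context: $\mathcal{M}_k$ denotes the complex $k\times k$ matrices, and $\mathcal{M}_k\otimes\mathcal{M}_m$ is identified with $\mathcal{M}_{km}$ via the Kronecker product. A state is a positive semidefinite Hermitian matrix (not necessarily of trace one). For an orthogonal projection $W$, $W^\perp=\mathrm{Id}-W$; for orthogonal projections $V,W$, $V\mathcal{M}_kW=\{VXW:X\in\mathcal{M}_k\}$. For $\gamma=\sum_{i=1}^nA_i\otimes B_i\in\mathcal{M}_k\otimes\mathcal{M}_m$ define $G_\gamma:\mathcal{M}_k\to\mathcal{M}_m$, $G_\gamma(X)=\sum_i\mathrm{tr}(A_iX)B_i$, and $F_\gamma:\mathcal{M}_m\to\mathcal{M}_k$, $F_\gamma(Y)=\sum_i\mathrm{tr}(B_iY)A_i$. A linear map is positive if it maps positive semidefinite matrices to positive semidefinite matrices, and self-adjoint if self-adjoint with respect to $\langle X,Y\rangle=\mathrm{tr}(XY^* )$. Given an orthogonal projection $V\in\mathcal{M}_k$ and a positive map $T:V\mathcal{M}_kV\to V\mathcal{M}_kV$, $T$ is irreducible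 if the only orthogonal projections $W$ with $W\mathcal{M}_kW\subseteq V\mathcal{M}_kV$ and $T(W\mathcal{M}_kW)\subseteq W\mathcal{M}_kW$ are $W=0$ and $W=V$. A self-adjoint positive map $T:\mathcal{M}_k\to\mathcal{M}_k$ is completely reducible if there are orthogonal projections $W_1,\dots,W_l$ with $W_iW_j=0$ for $i\ne j$, $T(W_i\mathcal{M}_kW_i)\subseteq W_i\mathcal{M}_kW_i$ and $T|_{W_i\mathcal{M}_kW_i}$ irreducible for every $i$, and $T|_R\equiv0$, where $R$ is the orthogonal complement (trace inner product) of $\bigoplus_iW_i\mathcal{M}_kW_i$ in $\mathcal{M}_k$. $CR_{k,m}$ is the set of states $\gamma\in\mathcal{M}_k\otimes\mathcal{M}_m$ such that $F_\gamma\circ G_\gamma:\mathcal{M}_k\to\mathcal{M}_k$ is completely reducible (completely reducible states). *)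

theory Defs
  imports "HOL-Analysis.Analysis"
begin

text \<open>Square complex matrices indexed by a finite type 'n (so M_k with k = CARD('n)).
  The Kronecker product of M_k and M_m is indexed by the product type 'k \<times> 'm.\<close>

type_synonym 'n cmat = "complex^'n^'n"

definition cadj :: "'n::finite cmat \<Rightarrow> 'n cmat" where
  "cadj A = (\<chi> i j. cnj (A $ j $ i))"

definition hermitian :: "'n::finite cmat \<Rightarrow> bool" where
  "hermitian A \<longleftrightarrow> cadj A = A"

definition psd :: "'n::finite cmat \<Rightarrow> bool" where
  "psd A \<longleftrightarrow> hermitian A \<and>
     (\<forall>x::complex^'n. let q = (\<Sum>i\<in>UNIV. \<Sum>j\<in>UNIV. cnj (x $ i) * A $ i $ j * x $ j)
        in Im q = 0 \<and> Re q \<ge> 0)"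

text \<open>A state is a positive semidefinite Hermitian matrix (trace not normalised).\<close>
definition is_state :: "'n::finite cmat \<Rightarrow> bool" where
  "is_state A \<longleftrightarrow> psd A"

definition orth_proj :: "'n::finite cmat \<Rightarrow> bool" where
  "orth_proj P \<longleftrightarrow> P ** P = P \<and> cadj P = P"

definition perp :: "'n::finite cmat \<Rightarrow> 'n cmat" where
  "perp W = mat 1 - W"

definition kron :: "'k::finite cmat \<Rightarrow> 'm::finite cmat \<Rightarrow> ('k \<times> 'm) cmat" where
  "kron A B = (\<chi> p q. A $ fst p $ fst q * B $ snd p $ snd q)"

definition tinner :: "'n::finite cmat \<Rightarrow> 'n cmat \<Rightarrow> complex" where
  "tinner X Y = trace (X ** cadj Y)"

definition corner :: "'n::finite cmat \<Rightarrow> 'n cmat \<Rightarrow> 'n cmat set" where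
  "corner V W = {V ** X ** W | X. True}"

text \<open>For gamma = sum_i A_i (x) B_i one has
  G_gamma(X) = sum_i tr(A_i X) B_i, whose (j,j') entry is
  sum_{a,a'} gamma_{(a,j),(a',j')} X_{a',a}; similarly for F_gamma.
  These coordinate formulas are independent of the decomposition.\<close>
definition G_map :: "('k::finite \<times> 'm::finite) cmat \<Rightarrow> 'k cmat \<Rightarrow> 'm cmat" where
  "G_map \<gamma> X = (\<chi> j j'. \<Sum>a\<in>UNIV. \<Sum>a'\<in>UNIV. \<gamma> $ (a, j) $ (a', j') * X $ a' $ a)"

definition F_map :: "('k::finite \<times> 'm::finite) cmat \<Rightarrow> 'm cmat \<Rightarrow> 'k cmat" where
  "F_map \<gamma> Y = (\<chi> i i'. \<Sum>b\<in>UNIV. \<Sum>b'\<in>UNIV. \<gamma> $ (i, b) $ (i', b') * Y $ b' $ b)"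

definition positive_map :: "('n::finite cmat \<Rightarrow> 'p::finite cmat) \<Rightarrow> bool" where
  "positive_map T \<longleftrightarrow> (\<forall>X. psd X \<longrightarrow> psd (T X))"

definition selfadjoint_map :: "('n::finite cmat \<Rightarrow> 'n cmat) \<Rightarrow> bool" where
  "selfadjoint_map T \<longleftrightarrow> (\<forall>X Y. tinner (T X) Y = tinner X (T Y))"

definition invariant_corner :: "('n::finite cmat \<Rightarrow> 'n cmat) \<Rightarrow> 'n cmat \<Rightarrow> bool" where
  "invariant_corner T V \<longleftrightarrow> T ` corner V V \<subseteq> corner V V"

definition irreducible_on :: "('n::finite cmat \<Rightarrow> 'n cmat) \<Rightarrow> 'n cmat \<Rightarrow> bool" where
  "irreducible_on T V \<longleftrightarrow>
     (\<forall>W. orth_proj W \<and> corner W W \<subseteq> corner V V \<and> T ` corner W W \<subseteq> corner W W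
          \<longrightarrow> W = 0 \<or> W = V)"

definition completely_reducible :: "('n::finite cmat \<Rightarrow> 'n cmat) \<Rightarrow> bool" where
  "completely_reducible T \<longleftrightarrow>
     selfadjoint_map T \<and> positive_map T \<and>
     (\<exists>Ws :: 'n cmat list.
        (\<forall>i<length Ws. orth_proj (Ws ! i)) \<and>
        (\<forall>i<length Ws. \<forall>j<length Ws. i \<noteq> j \<longrightarrow> Ws ! i ** Ws ! j = 0) \<and>
        (\<forall>i<length Ws. invariant_corner T (Ws ! i) \<and> irreducible_on T (Ws ! i)) \<and>
        (\<forall>X. (\<forall>i<length Ws. \<forall>Y\<in>corner (Ws ! i) (Ws ! i). tinner X Y = 0)
             \<longrightarrow> T X = 0))"

definition CR :: "('k::finite \<times> 'm::finite) cmat set" where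
  "CR = {\<gamma>. is_state \<gamma> \<and> completely_reducible (F_map \<gamma> \<circ> G_map \<gamma>)}"

end

theory Submission
  imports Defs
begin


definition cinner :: "complex^'n::finite \<Rightarrow> complex^'n \<Rightarrow> complex" where
  "cinner x y = (\<Sum>i\<in>UNIV. cnj (x$i) * y$i)"
definition outer :: "complex^'n::finite \<Rightarrow> complex^'n \<Rightarrow> 'n cmat" where
  "outer u v = (\<chi> i j. u$i * cnj (v$j))"
definition qf :: "'n::finite cmat \<Rightarrow> complex^'n \<Rightarrow> complex" where
  "qf A x = cinner x (A *v x)"

lemma cadj_cadj[simp]: "cadj (cadj A) = A" by (simp add: cadj_def vec_eq_iff)
lemma cadj_mult: "cadj (A ** B) = cadj B ** cadj A"
  by (simp add: cadj_def matrix_matrix_mult_def vec_eq_iff mult.commute)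
lemma cadj_add: "cadj (A + B) = cadj A + cadj B"
  by (simp add: cadj_def vec_eq_iff)
lemma cadj_diff: "cadj (A - B) = cadj A - cadj B"
  by (simp add: cadj_def vec_eq_iff)
lemma cadj_mat1[simp]: "cadj (mat 1) = mat 1"
  by (simp add: cadj_def mat_def vec_eq_iff)
lemma cadj_zero[simp]: "cadj 0 = 0"
  by (simp add: cadj_def vec_eq_iff)
lemma cadj_kron: "cadj (kron A B) = kron (cadj A) (cadj B)"
  by (simp add: cadj_def kron_def vec_eq_iff)

lemma kron_mult: "kron A B ** kron C D = kron (A ** C) (B ** D)"
  unfolding kron_def matrix_matrix_mult_def
  by (simp add: vec_eq_iff sum_product UNIV_Times_UNIV[symmetric] sum.cartesian_product mult_ac case_prod_beta
      del: UNIV_Times_UNIV)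

lemma kron_mat1[simp]: "kron (mat 1) (mat 1) = mat 1"
  by (auto simp add: kron_def mat_def vec_eq_iff prod_eq_iff)
lemma kron_add_left: "kron (A + B) C = kron A C + kron B C"
  by (simp add: kron_def vec_eq_iff distrib_right)
lemma kron_add_right: "kron A (B + C) = kron A B + kron A C"
  by (simp add: kron_def vec_eq_iff distrib_left)
lemma kron_diff_left: "kron (A - B) C = kron A C - kron B C"
  by (simp add: kron_def vec_eq_iff left_diff_distrib)
lemma kron_diff_right: "kron A (B - C) = kron A B - kron A C"
  by (simp add: kron_def vec_eq_iff right_diff_distrib)
lemma kron_zero_left[simp]: "kron 0 B = 0" by (simp add: kron_def vec_eq_iff)
lemma kron_zero_right[simp]: "kron A 0 = 0" by (simp add: kron_def vec_eq_iff)

lemma matrix_diff_ldistrib: "(A::'a::ring_1^'n^'m) ** (B - C) = A ** B - A ** C"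
  by (simp add: matrix_matrix_mult_def vec_eq_iff sum_subtractf right_diff_distrib)
lemma matrix_diff_rdistrib: "((A::'a::ring_1^'n^'m) - B) ** C = A ** C - B ** C"
  by (simp add: matrix_matrix_mult_def vec_eq_iff sum_subtractf left_diff_distrib)
lemma matrix_add_rdistrib: "((A::'a::semiring_1^'n^'m) + B) ** C = A ** C + B ** C"
  by (simp add: matrix_matrix_mult_def vec_eq_iff sum.distrib distrib_right)
lemma matrix_sum_rdistrib: "finite I \<Longrightarrow> (\<Sum>i\<in>I. (A i::'a::semiring_1^'n^'m)) ** C = (\<Sum>i\<in>I. A i ** C)"
  by (induct I rule: finite_induct) (auto simp: matrix_add_rdistrib)
lemma matrix_sum_ldistrib: "finite I \<Longrightarrow> C ** (\<Sum>i\<in>I. (A i::'a::semiring_1^'n^'m)) = (\<Sum>i\<in>I. C ** A i)"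
  by (induct I rule: finite_induct) (auto simp: matrix_add_ldistrib)

lemma orth_projD: "orth_proj P \<Longrightarrow> P ** P = P" "orth_proj P \<Longrightarrow> cadj P = P"
  by (auto simp: orth_proj_def)

lemma perp_perp[simp]: "perp (perp W) = W" by (simp add: perp_def)
lemma orth_proj_perp: "orth_proj P \<Longrightarrow> orth_proj (perp P)"
  by (simp add: orth_proj_def perp_def matrix_diff_ldistrib matrix_diff_rdistrib cadj_diff)
lemma proj_perp1: "orth_proj P \<Longrightarrow> P ** perp P = 0"
  by (simp add: orth_proj_def perp_def matrix_diff_ldistrib)
lemma proj_perp2: "orth_proj P \<Longrightarrow> perp P ** P = 0"
  by (simp add: orth_proj_def perp_def matrix_diff_rdistrib)
lemma perp_plus: "P + perp P = mat 1" by (simp add: perp_def)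

lemma orth_proj_kron: "orth_proj A \<Longrightarrow> orth_proj B \<Longrightarrow> orth_proj (kron A B)"
  by (simp add: orth_proj_def kron_mult cadj_kron)
lemma orth_proj_0[simp]: "orth_proj 0" by (simp add: orth_proj_def)
lemma orth_proj_1[simp]: "orth_proj (mat 1)" by (simp add: orth_proj_def)

lemma trace_cadj: "trace (cadj A) = cnj (trace A)"
  by (simp add: trace_def cadj_def)



lemma cinner_add_left: "cinner (x + y) z = cinner x z + cinner y z"
  by (simp add: cinner_def sum.distrib distrib_right)
lemma cinner_add_right: "cinner z (x + y) = cinner z x + cinner z y"
  by (simp add: cinner_def sum.distrib distrib_left)
lemma cinner_diff_left: "cinner (x - y) z = cinner x z - cinner y z"
  by (simp add: cinner_def sum_subtractf left_diff_distrib)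
lemma cinner_diff_right: "cinner z (x - y) = cinner z x - cinner z y"
  by (simp add: cinner_def sum_subtractf right_diff_distrib)
lemma cinner_scale_left: "cinner (c *s x) y = cnj c * cinner x y"
  by (simp add: cinner_def sum_distrib_left mult_ac)
lemma cinner_scale_right: "cinner x (c *s y) = c * cinner x y"
  by (simp add: cinner_def sum_distrib_left mult_ac)
lemma cinner_cnj: "cnj (cinner x y) = cinner y x"
  by (simp add: cinner_def mult.commute)
lemma cinner_zero_left[simp]: "cinner 0 y = 0" by (simp add: cinner_def)
lemma cinner_zero_right[simp]: "cinner x 0 = 0" by (simp add: cinner_def)
lemma mv_scale: "A *v (c *s x) = c *s (A *v (x::complex^'n))"
  by (simp add: matrix_vector_mult_def vec_eq_iff sum_distrib_left mult_ac)

lemma cinner_adj: "cinner x (A *v y) = cinner (cadj A *v x) y"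
proof -
  have "cinner x (A *v y) = (\<Sum>i\<in>UNIV. \<Sum>j\<in>UNIV. cnj (x$i) * A$i$j * y$j)"
    by (simp add: cinner_def matrix_vector_mult_def sum_distrib_left mult_ac)
  also have "... = (\<Sum>j\<in>UNIV. \<Sum>i\<in>UNIV. cnj (x$i) * A$i$j * y$j)" by (rule sum.swap)
  also have "... = cinner (cadj A *v x) y"
    by (simp add: cinner_def cadj_def matrix_vector_mult_def sum_distrib_right sum_distrib_left mult_ac)
  finally show ?thesis .
qed

lemma cinner_herm: "hermitian A \<Longrightarrow> cinner x (A *v y) = cinner (A *v x) y"
  by (simp add: cinner_adj hermitian_def)

lemma cnj_mult_self: "cnj a * a = complex_of_real ((cmod a)\<^sup>2)"
  by (metis complex_norm_square mult.commute of_real_power)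
lemma cinner_self: "cinner x x = (\<Sum>i\<in>UNIV. complex_of_real ((cmod (x$i))\<^sup>2))"
  unfolding cinner_def by (rule sum.cong) (simp_all only: cnj_mult_self)

lemma cinner_self_Im[simp]: "Im (cinner x x) = 0"
  by (simp add: cinner_self Im_sum)
lemma cinner_self_Re: "Re (cinner x x) = (\<Sum>i\<in>UNIV. (cmod (x$i))\<^sup>2)"
  by (simp add: cinner_self Re_sum)
lemma cinner_self_ge0: "0 \<le> Re (cinner x x)"
  by (simp add: cinner_self_Re sum_nonneg)
lemma cinner_self_real: "cinner x x = complex_of_real (Re (cinner x x))"
  by (simp add: complex_eq_iff)
lemma cinner_self_eq0: "cinner x x = 0 \<longleftrightarrow> x = 0"
proof
  assume "cinner x x = 0"
  then have "(\<Sum>i\<in>UNIV. (cmod (x$i))\<^sup>2) = 0" by (metis cinner_self_Re zero_complex.sel(1))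
  then have "\<forall>i\<in>UNIV. (cmod (x$i))\<^sup>2 = 0" by (subst (asm) sum_nonneg_eq_0_iff) auto
  then show "x = 0" by (simp add: vec_eq_iff)
qed simp

lemma psd_qf: "psd A \<longleftrightarrow> hermitian A \<and> (\<forall>x. Im (qf A x) = 0 \<and> 0 \<le> Re (qf A x))"
proof -
  have "(\<Sum>i\<in>UNIV. \<Sum>j\<in>UNIV. cnj (x $ i) * A $ i $ j * x $ j) = qf A x" for x
    by (simp add: qf_def cinner_def matrix_vector_mult_def sum_distrib_left mult_ac)
  then show ?thesis by (simp add: psd_def Let_def)
qed

lemma psd_herm: "psd A \<Longrightarrow> hermitian A" by (simp add: psd_qf)
lemma psd_cadj: "psd A \<Longrightarrow> cadj A = A" by (simp add: psd_qf hermitian_def)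
lemma psd_Im: "psd A \<Longrightarrow> Im (qf A x) = 0" by (simp add: psd_qf)
lemma psd_Re: "psd A \<Longrightarrow> 0 \<le> Re (qf A x)" by (simp add: psd_qf)
lemma psd_real: "psd A \<Longrightarrow> qf A x = complex_of_real (Re (qf A x))"
  by (simp add: psd_qf complex_eq_iff)

lemma qf_expand: "qf A (x + c *s y) = qf A x + c * cinner x (A *v y) + cnj c * cinner y (A *v x)
     + cnj c * c * qf A y"
  by (simp add: qf_def matrix_vector_right_distrib mv_scale cinner_add_left cinner_add_right
      cinner_scale_left cinner_scale_right algebra_simps)

lemma psd_kernel:
  assumes A: "psd A" and q: "qf A x = 0"
  shows "A *v x = 0"
proof -
  let ?y = "A *v x"
  have H: "hermitian A" using A by (rule psd_herm)
  define N where "N = Re (cinner ?y ?y)"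
  have N0: "N \<ge> 0" unfolding N_def by (rule cinner_self_ge0)
  have c2: "cinner ?y (A *v x) = of_real N"
    unfolding N_def by (rule cinner_self_real)
  have c1: "cinner x (A *v ?y) = of_real N"
    using cinner_herm[OF H, of x ?y] c2 by simp
  define d where "d = Re (qf A ?y)"
  have d0: "d \<ge> 0" unfolding d_def using psd_Re[OF A] .
  have dq: "qf A ?y = of_real d" unfolding d_def by (rule psd_real[OF A])
  define t where "t = N / (d + 1)"
  have "qf A (x + (- of_real t) *s ?y) = of_real (- 2 * t * N + t * t * d)"
    unfolding qf_expand by (simp add: q c1 c2 dq)
  then have "0 \<le> - 2 * t * N + t * t * d"
    using psd_Re[OF A, of "x + (- of_real t) *s ?y"] by simp
  moreover have "N > 0 \<Longrightarrow> - 2 * t * N + t * t * d < 0"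
  proof -
    assume Np: "N > 0"
    have tp: "t > 0" using Np d0 by (simp add: t_def)
    have "t * d < N" using Np d0 unfolding t_def by (simp add: field_simps)
    then have "t * (t * d) < t * (2 * N)" using tp Np by (intro mult_strict_left_mono) auto
    then show ?thesis by (simp add: algebra_simps)
  qed
  ultimately have "N = 0" using N0 by linarith
  then have "cinner ?y ?y = 0" using c2 by simp
  then show ?thesis by (simp add: cinner_self_eq0)
qed



lemma mult_outer: "B ** outer u w = outer (B *v u) w"
  by (simp add: outer_def matrix_matrix_mult_def matrix_vector_mult_def vec_eq_iff sum_distrib_right sum_distrib_left mult_ac)
lemma outer_zero[simp]: "outer 0 w = 0" "outer u 0 = 0" by (simp_all add: outer_def vec_eq_iff)
lemma trace_outer: "trace (outer v v ** B) = qf B v"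
proof -
  have "trace (outer v v ** B) = (\<Sum>i\<in>UNIV. \<Sum>k\<in>UNIV. v $ i * (cnj (v $ k) * B $ k $ i))"
    by (simp add: trace_def outer_def matrix_matrix_mult_def mult_ac)
  also have "... = (\<Sum>k\<in>UNIV. \<Sum>i\<in>UNIV. v $ i * (cnj (v $ k) * B $ k $ i))" by (rule sum.swap)
  also have "... = qf B v"
    by (simp add: qf_def cinner_def matrix_vector_mult_def sum_distrib_left mult_ac)
  finally show ?thesis .
qed
lemma cadj_outer: "cadj (outer u w) = outer w u"
  by (simp add: cadj_def outer_def vec_eq_iff)

lemma qf_axis: "qf A (axis k 1) = A$k$k"
  by (simp add: qf_def cinner_def matrix_vector_mult_def axis_def if_distrib if_distribR cong: if_cong)

lemma herm_entry: "hermitian A \<Longrightarrow> cnj (A$i$j) = A$j$i"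
  unfolding hermitian_def cadj_def by (metis vec_lambda_beta)

lemma psd_col_zero:
  assumes A: "psd A" and z: "A$k$k = 0"
  shows "A$i$k = 0" "A$k$i = 0"
proof -
  have "A *v axis k 1 = 0" using psd_kernel[OF A] qf_axis z by metis
  then have c: "A$i$k = 0" for i
    by (simp add: matrix_vector_mult_def axis_def vec_eq_iff if_distrib if_distribR cong: if_cong)
  show "A$i$k = 0" by (rule c)
  show "A$k$i = 0" using herm_entry[OF psd_herm[OF A], of i k] c[of i] by simp
qed

lemma psd_diag_real: "psd A \<Longrightarrow> A$k$k = complex_of_real (Re (A$k$k))"
  using psd_real[of A "axis k 1"] qf_axis by metis
lemma psd_diag_nonneg: "psd A \<Longrightarrow> 0 \<le> Re (A$k$k)"
  using psd_Re[of A "axis k 1"] qf_axis by metis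

lemma psd_decomp_aux:
  fixes S :: "'n::finite set"
  assumes "finite S"
  shows "psd A \<Longrightarrow> (\<forall>i j. (i \<notin> S \<or> j \<notin> S) \<longrightarrow> A$i$j = 0)
     \<Longrightarrow> \<exists>v. A = (\<Sum>i\<in>S. outer (v i) (v i))"
  using assms
proof (induct S arbitrary: A rule: finite_induct)
  case empty
  then have "A = 0" by (simp add: vec_eq_iff)
  then show ?case by simp
next
  case (insert k S)
  note A = insert.prems(1)
  have H: "hermitian A" using A by (rule psd_herm)
  show ?case
  proof (cases "A$k$k = 0")
    case True
    have "\<forall>i j. (i \<notin> S \<or> j \<notin> S) \<longrightarrow> A$i$j = 0"
    proof (intro allI impI)
      fix i j assume "i \<notin> S \<or> j \<notin> S"
      then show "A$i$j = 0"
        using insert.prems(2) psd_col_zero[OF A True] by (cases "i = k"; cases "j = k") auto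
    qed
    then obtain v where v: "A = (\<Sum>i\<in>S. outer (v i) (v i))" using insert.hyps(3)[OF A] by blast
    let ?v = "v(k := 0)"
    have "(\<Sum>i\<in>insert k S. outer (?v i) (?v i)) = (\<Sum>i\<in>S. outer (?v i) (?v i))"
      using insert.hyps by simp
    also have "... = (\<Sum>i\<in>S. outer (v i) (v i))"
      using insert.hyps by (intro sum.cong) auto
    finally show ?thesis using v by metis
  next
    case False
    define a where "a = Re (A$k$k)"
    have aeq: "A$k$k = of_real a" unfolding a_def by (rule psd_diag_real[OF A])
    have "a \<noteq> 0" using False aeq by auto
    then have apos: "a > 0" using psd_diag_nonneg[OF A, of k] a_def by linarith
    define A' where "A' = (\<chi> i j. A$i$j - A$i$k * cnj (A$j$k) / of_real a)"
    have H': "hermitian A'"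
      unfolding hermitian_def cadj_def A'_def
      using herm_entry[OF H] by (simp add: vec_eq_iff)
    have "qf A' x = qf A (x + (- (A *v x)$k / of_real a) *s axis k 1)" for x
    proof -
      define b where "b = (A *v x)$k"
      have e1: "cinner x (A *v axis k 1) = cnj b"
      proof -
        have "cinner x (A *v axis k 1) = cinner (A *v x) (axis k 1)" by (rule cinner_herm[OF H])
        also have "... = cnj b" by (simp add: b_def cinner_def axis_def if_distrib if_distribR cong: if_cong)
        finally show ?thesis .
      qed
      have e2: "cinner (axis k 1) (A *v x) = b"
        by (simp add: b_def cinner_def axis_def if_distrib if_distribR cong: if_cong)
      have e3: "qf A' x = qf A x - b * cnj b / of_real a"
      proof -
        have s1: "(\<Sum>i\<in>UNIV. cnj (x$i) * A$i$k) = cnj b"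
          unfolding b_def matrix_vector_mult_def using herm_entry[OF H]
          by (simp add: mult.commute)
        have s2: "(\<Sum>j\<in>UNIV. cnj (A$j$k) * x$j) = b"
          unfolding b_def matrix_vector_mult_def using herm_entry[OF H] by simp
        have "qf A' x = qf A x - (\<Sum>i\<in>UNIV. \<Sum>j\<in>UNIV. (cnj (x$i) * A$i$k) * (cnj (A$j$k) * x$j)) / of_real a"
          by (simp add: qf_def cinner_def A'_def matrix_vector_mult_def sum_subtractf
              right_diff_distrib left_diff_distrib sum_distrib_left sum_divide_distrib mult_ac)
        also have "(\<Sum>i\<in>UNIV. \<Sum>j\<in>UNIV. (cnj (x$i) * A$i$k) * (cnj (A$j$k) * x$j))
            = (\<Sum>i\<in>UNIV. cnj (x$i) * A$i$k) * (\<Sum>j\<in>UNIV. cnj (A$j$k) * x$j)"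
          by (simp add: sum_product)
        finally show ?thesis using s1 s2 by (simp add: mult.commute)
      qed
      show ?thesis
        unfolding qf_expand e1 e2 e3 qf_axis aeq
        using apos by (simp add: b_def field_simps)
    qed
    then have psdA': "psd A'"
      unfolding psd_qf using H' psd_Im[OF A] psd_Re[OF A] by simp
    have vanish: "\<forall>i j. (i \<notin> S \<or> j \<notin> S) \<longrightarrow> A'$i$j = 0"
    proof (intro allI impI)
      fix i j assume ij: "i \<notin> S \<or> j \<notin> S"
      have z: "\<forall>i j. (i \<notin> insert k S \<or> j \<notin> insert k S) \<longrightarrow> A$i$j = 0" using insert.prems(2) .
      show "A'$i$j = 0"
      proof (cases "i = k")
        case True
        then show ?thesis unfolding A'_def using herm_entry[OF H, of j k] aeq apos by simp
      next
        case ik: False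
        show ?thesis
        proof (cases "j = k")
          case True
          then show ?thesis unfolding A'_def using aeq apos
            by (simp add: complex_eq_iff)
        next
          case False
          then show ?thesis unfolding A'_def using z ij ik by auto
        qed
      qed
    qed
    obtain v where v: "A' = (\<Sum>i\<in>S. outer (v i) (v i))" using insert.hyps(3)[OF psdA' vanish] by blast
    define s where "s = complex_of_real (sqrt a)"
    define w where "w = (\<chi> i. A$i$k / s)"
    have ss: "s * cnj s = of_real a" using apos by (simp add: s_def of_real_mult[symmetric] del: of_real_mult)
    have "outer w w = (\<chi> i j. A$i$k * cnj (A$j$k) / of_real a)"
      unfolding outer_def w_def using ss by (simp add: vec_eq_iff)
    then have Aeq: "A = A' + outer w w" unfolding A'_def by (simp add: vec_eq_iff)
    let ?v = "v(k := w)"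
    have "(\<Sum>i\<in>insert k S. outer (?v i) (?v i)) = outer w w + (\<Sum>i\<in>S. outer (?v i) (?v i))"
      using insert.hyps by simp
    also have "(\<Sum>i\<in>S. outer (?v i) (?v i)) = (\<Sum>i\<in>S. outer (v i) (v i))"
      using insert.hyps by (intro sum.cong) auto
    finally show ?thesis using Aeq v by (metis add.commute)
  qed
qed

lemma psd_decomp: "psd (A::'n::finite cmat) \<Longrightarrow> \<exists>v. A = (\<Sum>i\<in>(UNIV::'n set). outer (v i) (v i))"
  by (rule psd_decomp_aux[of UNIV A]) auto



lemma trace_zero[simp]: "trace (0::complex^'n^'n) = 0"
  by (simp add: trace_def)
lemma trace_sum: "finite I \<Longrightarrow> trace (\<Sum>i\<in>I. (A i :: complex^'n^'n)) = (\<Sum>i\<in>I. trace (A i))"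
  by (induct I rule: finite_induct) (auto simp: trace_add)

lemma psd_trace_zero:
  fixes A B :: "'n::finite cmat"
  assumes A: "psd A" and B: "psd B" and t: "trace (A ** B) = 0"
  shows "B ** A = 0" "A ** B = 0"
proof -
  obtain v :: "'n \<Rightarrow> complex^'n" where v: "A = (\<Sum>i\<in>UNIV. outer (v i) (v i))" using psd_decomp[OF A] by blast
  have "trace (A ** B) = (\<Sum>i\<in>UNIV. qf B (v i))"
    unfolding v by (simp add: matrix_sum_rdistrib trace_sum trace_outer)
  then have "(\<Sum>i\<in>UNIV. Re (qf B (v i))) = 0" using t by (metis Re_sum zero_complex.sel(1))
  then have "\<forall>i\<in>UNIV. Re (qf B (v i)) = 0"
    by (subst (asm) sum_nonneg_eq_0_iff) (auto intro: psd_Re[OF B])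
  then have "qf B (v i) = 0" for i using psd_Im[OF B] by (simp add: complex_eq_iff)
  then have "B *v v i = 0" for i by (rule psd_kernel[OF B])
  then show BA: "B ** A = 0" unfolding v by (simp add: matrix_sum_ldistrib mult_outer)
  have "A ** B = cadj (B ** A)" using psd_cadj[OF A] psd_cadj[OF B] by (simp add: cadj_mult)
  then show "A ** B = 0" using BA by simp
qed

lemma psd_proj: "orth_proj P \<Longrightarrow> psd P"
proof -
  assume P: "orth_proj P"
  then have H: "hermitian P" by (simp add: orth_proj_def hermitian_def)
  have "qf P x = cinner (P *v x) (P *v x)" for x
  proof -
    have "qf P x = cinner x (P *v (P *v x))" using orth_projD(1)[OF P]
      by (simp add: qf_def matrix_vector_mul_assoc)
    also have "... = cinner (P *v x) (P *v x)" by (rule cinner_herm[OF H])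
    finally show ?thesis .
  qed
  then show ?thesis unfolding psd_qf using H by (simp add: cinner_self_ge0)
qed

lemma psd_proj_trace_zero:
  assumes "psd A" "orth_proj P" "trace (A ** P) = 0"
  shows "A ** P = 0" "P ** A = 0"
  using psd_trace_zero[OF assms(1) psd_proj[OF assms(2)] assms(3)] by auto

lemma tinner_self_zero: "tinner Z Z = 0 \<Longrightarrow> (Z::'n::finite cmat) = 0"
proof -
  assume z: "tinner Z Z = 0"
  have "tinner Z Z = (\<Sum>i\<in>UNIV. cinner (Z$i) (Z$i))"
    by (simp add: tinner_def trace_def matrix_matrix_mult_def cadj_def cinner_def mult.commute)
  then have "(\<Sum>i\<in>UNIV. Re (cinner (Z$i) (Z$i))) = 0" using z by (metis Re_sum zero_complex.sel(1))
  then have "\<forall>i\<in>UNIV. Re (cinner (Z$i) (Z$i)) = 0"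
    by (subst (asm) sum_nonneg_eq_0_iff) (auto intro: cinner_self_ge0)
  then have "cinner (Z$i) (Z$i) = 0" for i by (simp add: complex_eq_iff)
  then show "Z = 0" by (simp add: cinner_self_eq0 vec_eq_iff)
qed

lemma mat_eq_zero_trace: "(\<And>Y. trace (A ** Y) = 0) \<Longrightarrow> (A::'n::finite cmat) = 0"
  by (rule tinner_self_zero) (simp add: tinner_def)

lemma mat_eq_trace: "(\<And>Y. trace (A ** Y) = trace (B ** Y)) \<Longrightarrow> (A::'n::finite cmat) = B"
proof -
  assume "\<And>Y. trace (A ** Y) = trace (B ** Y)"
  then have "\<And>Y. trace ((A - B) ** Y) = 0" by (simp add: matrix_diff_rdistrib trace_sub)
  then show "A = B" using mat_eq_zero_trace[of "A - B"] by simp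
qed



lemma sum_UNIV_prod: "(\<Sum>p\<in>(UNIV::('a::finite\<times>'b::finite) set). f p) = (\<Sum>a\<in>UNIV. \<Sum>b\<in>UNIV. f (a,b))"
  by (simp add: sum.cartesian_product case_prod_beta' flip: UNIV_Times_UNIV)

lemma sum4_a: "(\<Sum>j\<in>J. \<Sum>j'\<in>J'. \<Sum>a\<in>A. \<Sum>a'\<in>A'. f a j a' j') = (\<Sum>a\<in>A. \<Sum>j\<in>J. \<Sum>a'\<in>A'. \<Sum>j'\<in>J'. f a j a' j')"
proof -
  have "(\<Sum>j\<in>J. \<Sum>j'\<in>J'. \<Sum>a\<in>A. \<Sum>a'\<in>A'. f a j a' j') = (\<Sum>j\<in>J. \<Sum>a\<in>A. \<Sum>j'\<in>J'. \<Sum>a'\<in>A'. f a j a' j')"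
    by (rule sum.cong[OF refl], rule sum.swap)
  also have "... = (\<Sum>j\<in>J. \<Sum>a\<in>A. \<Sum>a'\<in>A'. \<Sum>j'\<in>J'. f a j a' j')"
    by (rule sum.cong[OF refl], rule sum.cong[OF refl], rule sum.swap)
  also have "... = (\<Sum>a\<in>A. \<Sum>j\<in>J. \<Sum>a'\<in>A'. \<Sum>j'\<in>J'. f a j a' j')" by (rule sum.swap)
  finally show ?thesis .
qed

lemma sum4_b: "(\<Sum>a'\<in>A'. \<Sum>a\<in>A. \<Sum>j\<in>J. \<Sum>j'\<in>J'. f a j a' j') = (\<Sum>a\<in>A. \<Sum>j\<in>J. \<Sum>a'\<in>A'. \<Sum>j'\<in>J'. f a j a' j')"
proof -
  have "(\<Sum>a'\<in>A'. \<Sum>a\<in>A. \<Sum>j\<in>J. \<Sum>j'\<in>J'. f a j a' j') = (\<Sum>a\<in>A. \<Sum>a'\<in>A'. \<Sum>j\<in>J. \<Sum>j'\<in>J'. f a j a' j')"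
    by (rule sum.swap)
  also have "... = (\<Sum>a\<in>A. \<Sum>j\<in>J. \<Sum>a'\<in>A'. \<Sum>j'\<in>J'. f a j a' j')"
    by (rule sum.cong[OF refl], rule sum.swap)
  finally show ?thesis .
qed

lemma sum4_c: "(\<Sum>a\<in>A. \<Sum>a'\<in>A'. \<Sum>j\<in>J. \<Sum>j'\<in>J'. f a j a' j') = (\<Sum>a\<in>A. \<Sum>j\<in>J. \<Sum>a'\<in>A'. \<Sum>j'\<in>J'. f a j a' j')"
  by (rule sum.cong[OF refl], rule sum.swap)

lemma trace_kron_expand: "trace (\<gamma> ** kron X Y) =
   (\<Sum>a\<in>UNIV. \<Sum>j\<in>UNIV. \<Sum>a'\<in>UNIV. \<Sum>j'\<in>UNIV. \<gamma>$(a,j)$(a',j') * (X$a'$a * Y$j'$j))"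
  by (simp add: trace_def matrix_matrix_mult_def kron_def sum_UNIV_prod)

lemma trace_G: "trace (G_map \<gamma> X ** Y) = trace (\<gamma> ** kron X Y)"
proof -
  have "trace (G_map \<gamma> X ** Y) = (\<Sum>j\<in>UNIV. \<Sum>j'\<in>UNIV. \<Sum>a\<in>UNIV. \<Sum>a'\<in>UNIV. \<gamma>$(a,j)$(a',j') * (X$a'$a * Y$j'$j))"
    unfolding trace_def matrix_matrix_mult_def G_map_def
    by (simp only: vec_lambda_beta sum_distrib_right mult.assoc)
  also have "... = (\<Sum>a\<in>UNIV. \<Sum>j\<in>UNIV. \<Sum>a'\<in>UNIV. \<Sum>j'\<in>UNIV. \<gamma>$(a,j)$(a',j') * (X$a'$a * Y$j'$j))"
    by (rule sum4_a)
  finally show ?thesis unfolding trace_kron_expand .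
qed

lemma trace_F: "trace (X ** F_map \<gamma> Y) = trace (\<gamma> ** kron X Y)"
proof -
  have "trace (X ** F_map \<gamma> Y) = (\<Sum>a'\<in>UNIV. \<Sum>a\<in>UNIV. \<Sum>j\<in>UNIV. \<Sum>j'\<in>UNIV. \<gamma>$(a,j)$(a',j') * (X$a'$a * Y$j'$j))"
    unfolding trace_def matrix_matrix_mult_def F_map_def
    by (simp only: vec_lambda_beta sum_distrib_left) (simp only: mult_ac)
  also have "... = (\<Sum>a\<in>UNIV. \<Sum>j\<in>UNIV. \<Sum>a'\<in>UNIV. \<Sum>j'\<in>UNIV. \<gamma>$(a,j)$(a',j') * (X$a'$a * Y$j'$j))"
    by (rule sum4_b)
  finally show ?thesis unfolding trace_kron_expand .
qed

lemma G_add: "G_map \<gamma> (X + Y) = G_map \<gamma> X + G_map \<gamma> Y"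
  by (simp add: G_map_def vec_eq_iff distrib_left sum.distrib)
lemma G_diff: "G_map \<gamma> (X - Y) = G_map \<gamma> X - G_map \<gamma> Y"
  by (simp add: G_map_def vec_eq_iff right_diff_distrib sum_subtractf)
lemma G_zero[simp]: "G_map \<gamma> 0 = 0"
  by (simp add: G_map_def vec_eq_iff)
lemma F_add: "F_map \<gamma> (X + Y) = F_map \<gamma> X + F_map \<gamma> Y"
  by (simp add: F_map_def vec_eq_iff distrib_left sum.distrib)
lemma F_diff: "F_map \<gamma> (X - Y) = F_map \<gamma> X - F_map \<gamma> Y"
  by (simp add: F_map_def vec_eq_iff right_diff_distrib sum_subtractf)
lemma F_zero[simp]: "F_map \<gamma> 0 = 0"
  by (simp add: F_map_def vec_eq_iff)
lemma G_sum: "finite I \<Longrightarrow> G_map \<gamma> (\<Sum>i\<in>I. X i) = (\<Sum>i\<in>I. G_map \<gamma> (X i))"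
  by (induct I rule: finite_induct) (auto simp: G_add)
lemma F_sum: "finite I \<Longrightarrow> F_map \<gamma> (\<Sum>i\<in>I. X i) = (\<Sum>i\<in>I. F_map \<gamma> (X i))"
  by (induct I rule: finite_induct) (auto simp: F_add)

lemma G_cadj: assumes H: "hermitian \<gamma>" shows "G_map \<gamma> (cadj X) = cadj (G_map \<gamma> X)"
proof -
  have "(\<Sum>a\<in>UNIV. \<Sum>a'\<in>UNIV. \<gamma>$(a,j)$(a',j') * cnj (X$a$a')) =
        (\<Sum>a\<in>UNIV. \<Sum>a'\<in>UNIV. cnj (\<gamma>$(a,j')$(a',j)) * cnj (X$a'$a))" for j j'
  proof -
    have "(\<Sum>a\<in>UNIV. \<Sum>a'\<in>UNIV. \<gamma>$(a,j)$(a',j') * cnj (X$a$a')) =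
          (\<Sum>a'\<in>UNIV. \<Sum>a\<in>UNIV. \<gamma>$(a,j)$(a',j') * cnj (X$a$a'))" by (rule sum.swap)
    then show ?thesis using herm_entry[OF H] by simp
  qed
  then show ?thesis by (simp add: G_map_def cadj_def vec_eq_iff)
qed

lemma F_cadj: assumes H: "hermitian \<gamma>" shows "F_map \<gamma> (cadj X) = cadj (F_map \<gamma> X)"
proof -
  have "(\<Sum>a\<in>UNIV. \<Sum>a'\<in>UNIV. \<gamma>$(j,a)$(j',a') * cnj (X$a$a')) =
        (\<Sum>a\<in>UNIV. \<Sum>a'\<in>UNIV. cnj (\<gamma>$(j',a)$(j,a')) * cnj (X$a'$a))" for j j'
  proof -
    have "(\<Sum>a\<in>UNIV. \<Sum>a'\<in>UNIV. \<gamma>$(j,a)$(j',a') * cnj (X$a$a')) =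
          (\<Sum>a'\<in>UNIV. \<Sum>a\<in>UNIV. \<gamma>$(j,a)$(j',a') * cnj (X$a$a'))" by (rule sum.swap)
    then show ?thesis using herm_entry[OF H] by simp
  qed
  then show ?thesis by (simp add: F_map_def cadj_def vec_eq_iff)
qed

definition tens :: "complex^'a::finite \<Rightarrow> complex^'b::finite \<Rightarrow> complex^('a\<times>'b)" where
  "tens u x = (\<chi> p. u$(fst p) * x$(snd p))"

lemma qf_G_outer: "qf (G_map \<gamma> (outer u u)) x = qf \<gamma> (tens u x)"
proof -
  have "qf (G_map \<gamma> (outer u u)) x = (\<Sum>j\<in>UNIV. \<Sum>j'\<in>UNIV. \<Sum>a\<in>UNIV. \<Sum>a'\<in>UNIV.
      cnj (u$a * x$j) * \<gamma>$(a,j)$(a',j') * (u$a' * x$j'))"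
    unfolding qf_def cinner_def matrix_vector_mult_def G_map_def outer_def
    by (simp only: vec_lambda_beta sum_distrib_left sum_distrib_right) (simp only: mult_ac complex_cnj_mult)
  also have "... = (\<Sum>a\<in>UNIV. \<Sum>j\<in>UNIV. \<Sum>a'\<in>UNIV. \<Sum>j'\<in>UNIV.
      cnj (u$a * x$j) * \<gamma>$(a,j)$(a',j') * (u$a' * x$j'))" by (rule sum4_a)
  also have "... = qf \<gamma> (tens u x)"
    unfolding qf_def cinner_def matrix_vector_mult_def tens_def sum_UNIV_prod
    by (simp only: vec_lambda_beta sum_distrib_left fst_conv snd_conv) (simp only: mult_ac)
  finally show ?thesis .
qed

lemma qf_F_outer: "qf (F_map \<gamma> (outer w w)) x = qf \<gamma> (tens x w)"
proof -
  have "qf (F_map \<gamma> (outer w w)) x = (\<Sum>i\<in>UNIV. \<Sum>i'\<in>UNIV. \<Sum>b\<in>UNIV. \<Sum>b'\<in>UNIV.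
      cnj (x$i * w$b) * \<gamma>$(i,b)$(i',b') * (x$i' * w$b'))"
    unfolding qf_def cinner_def matrix_vector_mult_def F_map_def outer_def
    by (simp only: vec_lambda_beta sum_distrib_left sum_distrib_right) (simp only: mult_ac complex_cnj_mult)
  also have "... = (\<Sum>i\<in>UNIV. \<Sum>b\<in>UNIV. \<Sum>i'\<in>UNIV. \<Sum>b'\<in>UNIV.
      cnj (x$i * w$b) * \<gamma>$(i,b)$(i',b') * (x$i' * w$b'))"
    by (rule sum.cong[OF refl], rule sum.swap)
  also have "... = qf \<gamma> (tens x w)"
    unfolding qf_def cinner_def matrix_vector_mult_def tens_def sum_UNIV_prod
    by (simp only: vec_lambda_beta sum_distrib_left fst_conv snd_conv) (simp only: mult_ac)
  finally show ?thesis .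
qed

lemma qf_add_mat: "qf (A + B) x = qf A x + qf B x"
  by (simp add: qf_def matrix_vector_mult_add_rdistrib cinner_add_right)
lemma qf_zero_mat[simp]: "qf 0 x = 0" by (simp add: qf_def)
lemma qf_sum_mat: "finite I \<Longrightarrow> qf (\<Sum>i\<in>I. A i) x = (\<Sum>i\<in>I. qf (A i) x)"
  by (induct I rule: finite_induct) (simp_all add: qf_add_mat)

lemma G_pos: fixes \<gamma> :: "('a::finite\<times>'b::finite) cmat" assumes g: "psd \<gamma>" and X: "psd X" shows "psd (G_map \<gamma> X)"
proof -
  obtain u :: "'a \<Rightarrow> complex^'a" where u: "X = (\<Sum>i\<in>UNIV. outer (u i) (u i))"
    using psd_decomp[OF X] by (elim exE)
  have herm: "hermitian (G_map \<gamma> X)"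
    using G_cadj[OF psd_herm[OF g], of X] psd_cadj[OF X] by (simp add: hermitian_def)
  have qfe: "qf (G_map \<gamma> X) x = (\<Sum>i\<in>UNIV. qf \<gamma> (tens (u i) x))" for x
    unfolding u by (simp add: G_sum qf_sum_mat qf_G_outer)
  show ?thesis unfolding psd_qf
  proof (intro conjI allI herm)
    fix x
    show "Im (qf (G_map \<gamma> X) x) = 0" using psd_Im[OF g] by (simp add: qfe)
    show "0 \<le> Re (qf (G_map \<gamma> X) x)" using psd_Re[OF g] by (simp add: qfe sum_nonneg)
  qed
qed

lemma F_pos: fixes \<gamma> :: "('a::finite\<times>'b::finite) cmat" assumes g: "psd \<gamma>" and X: "psd X" shows "psd (F_map \<gamma> X)"
proof -
  obtain u :: "'b \<Rightarrow> complex^'b" where u: "X = (\<Sum>i\<in>UNIV. outer (u i) (u i))"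
    using psd_decomp[OF X] by (elim exE)
  have herm: "hermitian (F_map \<gamma> X)"
    using F_cadj[OF psd_herm[OF g], of X] psd_cadj[OF X] by (simp add: hermitian_def)
  have qfe: "qf (F_map \<gamma> X) x = (\<Sum>i\<in>UNIV. qf \<gamma> (tens x (u i)))" for x
    unfolding u by (simp add: F_sum qf_sum_mat qf_F_outer)
  show ?thesis unfolding psd_qf
  proof (intro conjI allI herm)
    fix x
    show "Im (qf (F_map \<gamma> X) x) = 0" using psd_Im[OF g] by (simp add: qfe)
    show "0 \<le> Re (qf (F_map \<gamma> X) x)" using psd_Re[OF g] by (simp add: qfe sum_nonneg)
  qed
qed



lemma trace_cyc3: "trace ((A::complex^'n^'n) ** B ** C) = trace (B ** C ** A)"
  by (metis matrix_mul_assoc trace_mul_sym)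

lemma tinner_GF: assumes H: "hermitian \<gamma>"
  shows "tinner (G_map \<gamma> X) Z = tinner X (F_map \<gamma> Z)"
  unfolding tinner_def F_cadj[OF H, symmetric] trace_G trace_F ..

lemma tinner_FG: assumes H: "hermitian \<gamma>"
  shows "tinner (F_map \<gamma> Z) X = tinner Z (G_map \<gamma> X)"
  unfolding tinner_def G_cadj[OF H, symmetric]
  by (metis trace_G trace_F trace_mul_sym)

lemma selfadj_T: assumes H: "hermitian \<gamma>" shows "selfadjoint_map (F_map \<gamma> \<circ> G_map \<gamma>)"
  unfolding selfadjoint_map_def comp_def
  by (metis tinner_FG[OF H] tinner_GF[OF H])

lemma tinner_zero_left[simp]: "tinner 0 X = 0" by (simp add: tinner_def)

lemma T_zero_G: assumes H: "hermitian \<gamma>" and T: "F_map \<gamma> (G_map \<gamma> X) = 0"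
  shows "G_map \<gamma> X = 0"
proof -
  have "tinner (G_map \<gamma> X) (G_map \<gamma> X) = tinner (F_map \<gamma> (G_map \<gamma> X)) X"
    by (rule tinner_FG[OF H, symmetric])
  then show ?thesis using T tinner_self_zero by simp
qed

lemma positive_T: assumes g: "psd \<gamma>" shows "positive_map (F_map \<gamma> \<circ> G_map \<gamma>)"
  unfolding positive_map_def using G_pos[OF g] F_pos[OF g] by simp

lemma corner_iff: assumes P: "orth_proj P" shows "Z \<in> corner P P \<longleftrightarrow> Z = P ** Z ** P"
proof
  assume "Z \<in> corner P P"
  then obtain X where "Z = P ** X ** P" unfolding corner_def by blast
  moreover have "P ** (P ** X ** P) ** P = (P ** P) ** X ** (P ** P)" by (simp add: matrix_mul_assoc)
  ultimately show "Z = P ** Z ** P" using orth_projD(1)[OF P] by simp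
next
  assume "Z = P ** Z ** P" then show "Z \<in> corner P P" unfolding corner_def by blast
qed

lemma corner_mem: "P ** X ** P \<in> corner P P" unfolding corner_def by blast

lemma herm_cadj: "hermitian A \<Longrightarrow> cadj A = A" by (simp add: hermitian_def)
lemma orth_proj_herm: "orth_proj P \<Longrightarrow> hermitian P" by (simp add: orth_proj_def hermitian_def)

lemma KZ:
  assumes H: "hermitian \<gamma>" and K: "orth_proj (K::('a::finite\<times>'b::finite) cmat)" and z: "\<gamma> ** K = 0"
  shows "trace (\<gamma> ** (K ** M)) = 0" "trace (\<gamma> ** (M ** K)) = 0"
proof -
  show "trace (\<gamma> ** (K ** M)) = 0" using z by (simp add: matrix_mul_assoc)
  have "K ** \<gamma> = cadj (\<gamma> ** K)" using herm_cadj[OF H] orth_projD(2)[OF K] by (simp add: cadj_mult)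
  then have z2: "K ** \<gamma> = 0" using z by simp
  have "trace (\<gamma> ** (M ** K)) = trace (K ** \<gamma> ** M)"
    using trace_cyc3[of K \<gamma> M] by (simp add: matrix_mul_assoc)
  then show "trace (\<gamma> ** (M ** K)) = 0" using z2 by simp
qed

lemma KZ2:
  assumes H: "hermitian \<gamma>" and P: "orth_proj P" and Q: "orth_proj Q" and z: "\<gamma> ** kron P Q = 0"
  shows "trace (\<gamma> ** kron (P ** A) (Q ** B)) = 0" "trace (\<gamma> ** kron (A ** P) (B ** Q)) = 0"
  using KZ[OF H orth_proj_kron[OF P Q] z, of "kron A B"] by (simp_all add: kron_mult)

lemma sandwich:
  assumes "A ** perp V = 0" "perp V ** A = 0"
  shows "A = V ** A ** V"
proof -
  have "A = A ** V" using assms(1) by (simp add: perp_def matrix_diff_ldistrib)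
  moreover have "A = V ** A" using assms(2) by (simp add: perp_def matrix_diff_rdistrib)
  ultimately show ?thesis by metis
qed

lemma invariance_from_a:
  fixes \<gamma> :: "('a::finite\<times>'b::finite) cmat"
  assumes H: "hermitian \<gamma>" and P: "orth_proj P" and V: "orth_proj V"
    and z1: "\<gamma> ** kron P (perp V) = 0" and z2: "\<gamma> ** kron (perp P) V = 0"
  shows "F_map \<gamma> (G_map \<gamma> (P ** Z ** P)) = P ** F_map \<gamma> (G_map \<gamma> (P ** Z ** P)) ** P"
proof -
  have pV: "orth_proj (perp V)" and pP: "orth_proj (perp P)" using V P by (simp_all add: orth_proj_perp)
  let ?G = "G_map \<gamma> (P ** Z ** P)"
  have a1: "?G ** perp V = 0"
  proof (rule mat_eq_zero_trace)
    fix Y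
    have "trace (?G ** perp V ** Y) = trace (\<gamma> ** kron (P ** (Z ** P)) (perp V ** Y))"
      by (simp add: matrix_mul_assoc trace_G flip: matrix_mul_assoc)
    then show "trace (?G ** perp V ** Y) = 0" using KZ2(1)[OF H P pV z1] by simp
  qed
  have a2: "perp V ** ?G = 0"
  proof (rule mat_eq_zero_trace)
    fix Y
    have "trace (perp V ** ?G ** Y) = trace (?G ** (Y ** perp V))"
      using trace_cyc3 by (metis matrix_mul_assoc)
    also have "... = trace (\<gamma> ** kron ((P ** Z) ** P) (Y ** perp V))"
      by (rule trace_G)
    finally show "trace (perp V ** ?G ** Y) = 0" using KZ2(2)[OF H P pV z1] by simp
  qed
  have GV: "?G = V ** ?G ** V" by (rule sandwich[OF a1 a2])
  let ?F = "F_map \<gamma> (V ** ?G ** V)"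
  have b1: "?F ** perp P = 0"
  proof (rule mat_eq_zero_trace)
    fix X
    have "trace (?F ** perp P ** X) = trace ((perp P ** X) ** ?F)"
      using trace_cyc3 by (metis matrix_mul_assoc)
    also have "... = trace (\<gamma> ** kron (perp P ** X) (V ** (?G ** V)))"
      by (simp only: trace_F matrix_mul_assoc)
    finally show "trace (?F ** perp P ** X) = 0" using KZ2(1)[OF H pP V z2] by simp
  qed
  have b2: "perp P ** ?F = 0"
  proof (rule mat_eq_zero_trace)
    fix X
    have "trace (perp P ** ?F ** X) = trace ((X ** perp P) ** ?F)"
      using trace_cyc3 by (metis matrix_mul_assoc)
    also have "... = trace (\<gamma> ** kron (X ** perp P) ((V ** ?G) ** V))"
      by (rule trace_F)
    finally show "trace (perp P ** ?F ** X) = 0" using KZ2(2)[OF H pP V z2] by simp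
  qed
  have "?F = P ** ?F ** P" by (rule sandwich[OF b1 b2])
  then show ?thesis using GV by metis
qed



lemma pz1: "orth_proj W \<Longrightarrow> A ** W ** perp W = 0"
  by (metis matrix_mul_assoc proj_perp1 times0_right)
lemma pz2: "orth_proj W \<Longrightarrow> A ** perp W ** W = 0"
  by (metis matrix_mul_assoc proj_perp2 times0_right)
lemma pz3: "orth_proj W \<Longrightarrow> perp W ** (W ** A) = 0"
  by (metis matrix_mul_assoc proj_perp2 times0_left)
lemma pz4: "orth_proj W \<Longrightarrow> W ** (perp W ** A) = 0"
  by (metis matrix_mul_assoc proj_perp1 times0_left)
lemma pidem: "orth_proj W \<Longrightarrow> A ** W ** W = A ** W"
  by (metis matrix_mul_assoc orth_projD(1))

lemma a_to_zero:
  assumes g: "psd \<gamma>" and W: "orth_proj W" and V: "orth_proj V"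
    and t: "trace (\<gamma> ** kron W V) = 0"
  shows "\<gamma> ** kron W V = 0"
  using psd_proj_trace_zero(1)[OF g orth_proj_kron[OF W V] t] .

lemma b_implies_a:
  assumes W: "orth_proj W" and V: "orth_proj V"
    and b: "\<gamma> = kron W V ** \<gamma> ** kron W V + kron (perp W) (perp V) ** \<gamma> ** kron (perp W) (perp V)"
  shows "trace (\<gamma> ** kron W (perp V)) = 0 \<and> trace (\<gamma> ** kron (perp W) V) = 0"
proof -
  have e: "\<gamma> ** K = kron W V ** \<gamma> ** (kron W V ** K) + kron (perp W) (perp V) ** \<gamma> ** (kron (perp W) (perp V) ** K)" for K
    by (subst b) (simp add: matrix_add_rdistrib matrix_mul_assoc)
  have pW: "orth_proj (perp W)" and pV: "orth_proj (perp V)" using W V by (simp_all add: orth_proj_perp)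
  show ?thesis using e[of "kron W (perp V)"] e[of "kron (perp W) V"]
    by (simp add: kron_mult proj_perp1[OF W] proj_perp2[OF W] proj_perp1[OF V] proj_perp2[OF V]
        orth_projD(1)[OF W] orth_projD(1)[OF V])
qed

lemma b_implies_cross:
  fixes \<gamma> :: "('a::finite\<times>'b::finite) cmat"
  assumes W: "orth_proj W" and V: "orth_proj V"
    and b: "\<gamma> = kron W V ** \<gamma> ** kron W V + kron (perp W) (perp V) ** \<gamma> ** kron (perp W) (perp V)"
  shows "G_map \<gamma> (W ** Z ** perp W) = 0"
proof (rule mat_eq_zero_trace)
  fix Y :: "'b cmat"
  let ?N = "kron (W ** Z ** perp W) Y"
  have cyc: "trace ((K ** \<gamma> ** K) ** N) = trace (\<gamma> ** (K ** N ** K))" for K N :: "('a \<times> 'b) cmat"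
    by (metis matrix_mul_assoc trace_mul_sym)
  have "trace (G_map \<gamma> (W ** Z ** perp W) ** Y) = trace (\<gamma> ** ?N)" by (rule trace_G)
  also have "... = trace (\<gamma> ** (kron W V ** ?N ** kron W V)) +
      trace (\<gamma> ** (kron (perp W) (perp V) ** ?N ** kron (perp W) (perp V)))"
    by (subst b) (simp add: matrix_add_rdistrib trace_add cyc)
  also have "... = 0"
    by (simp add: kron_mult pz1[OF W] pz2[OF W] pz3[OF W] pz4[OF W] proj_perp1[OF W] proj_perp2[OF W]
         matrix_mul_assoc[symmetric])
  finally show "trace (G_map \<gamma> (W ** Z ** perp W) ** Y) = 0" .
qed

lemma sum4_d: "(\<Sum>b'\<in>B'. \<Sum>l'\<in>L'. \<Sum>b\<in>B. \<Sum>l\<in>L. f b' l' b l) = (\<Sum>l'\<in>L'. \<Sum>l\<in>L. \<Sum>b\<in>B. \<Sum>b'\<in>B'. f b' l' b l)"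
proof -
  have "(\<Sum>b'\<in>B'. \<Sum>l'\<in>L'. \<Sum>b\<in>B. \<Sum>l\<in>L. f b' l' b l) = (\<Sum>l'\<in>L'. \<Sum>b'\<in>B'. \<Sum>b\<in>B. \<Sum>l\<in>L. f b' l' b l)"
    by (rule sum.swap)
  also have "... = (\<Sum>l'\<in>L'. \<Sum>b'\<in>B'. \<Sum>l\<in>L. \<Sum>b\<in>B. f b' l' b l)"
    by (rule sum.cong[OF refl], rule sum.cong[OF refl], rule sum.swap)
  also have "... = (\<Sum>l'\<in>L'. \<Sum>l\<in>L. \<Sum>b'\<in>B'. \<Sum>b\<in>B. f b' l' b l)"
    by (rule sum.cong[OF refl], rule sum.swap)
  also have "... = (\<Sum>l'\<in>L'. \<Sum>l\<in>L. \<Sum>b\<in>B. \<Sum>b'\<in>B'. f b' l' b l)"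
    by (rule sum.cong[OF refl], rule sum.cong[OF refl], rule sum.swap)
  finally show ?thesis .
qed

lemma kron_sandwich_entry:
  "(kron A B ** \<gamma> ** kron C D)$(a,j)$(a',j') = (B ** G_map \<gamma> (\<chi> x y. C$x$a' * A$a$y) ** D)$j$j'"
proof -
  have "(kron A B ** \<gamma> ** kron C D)$(a,j)$(a',j') =
     (\<Sum>b'\<in>UNIV. \<Sum>l'\<in>UNIV. \<Sum>b\<in>UNIV. \<Sum>l\<in>UNIV. A$a$b * B$j$l * \<gamma>$(b,l)$(b',l') * (C$b'$a' * D$l'$j'))"
    unfolding matrix_matrix_mult_def kron_def
    by (simp only: vec_lambda_beta sum_UNIV_prod fst_conv snd_conv sum_distrib_right)
  also have "... = (\<Sum>l'\<in>UNIV. \<Sum>l\<in>UNIV. \<Sum>b\<in>UNIV. \<Sum>b'\<in>UNIV. A$a$b * B$j$l * \<gamma>$(b,l)$(b',l') * (C$b'$a' * D$l'$j'))"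
    by (rule sum4_d)
  also have "... = (B ** G_map \<gamma> (\<chi> x y. C$x$a' * A$a$y) ** D)$j$j'"
    unfolding matrix_matrix_mult_def G_map_def
    by (simp only: vec_lambda_beta sum_distrib_right sum_distrib_left) (simp only: mult_ac)
  finally show ?thesis .
qed

definition Eu :: "'n \<Rightarrow> 'n \<Rightarrow> 'n::finite cmat" where
  "Eu i j = (\<chi> x y. if x = i \<and> y = j then 1 else 0)"

lemma Eu_sandwich: "(\<chi> x y. C$x$a' * A$a$y) = C ** Eu a' a ** (A::'n::finite cmat)"
proof -
  have d: "(\<Sum>ka\<in>UNIV. if ka = a' \<and> k = a then c else 0) = (if k = a then c else (0::complex))" for k c
    by (cases "k = a") simp_all
  show ?thesis
    by (simp add: vec_eq_iff matrix_matrix_mult_def Eu_def if_distrib if_distribR d cong: if_cong)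
qed

lemma cross_zero:
  fixes \<gamma> :: "('a::finite\<times>'b::finite) cmat"
  assumes z: "\<And>Z. G_map \<gamma> (C ** Z ** A) = 0"
  shows "kron A B ** \<gamma> ** kron C D = 0"
  unfolding vec_eq_iff
proof (intro allI)
  fix p q :: "'a \<times> 'b"
  obtain a j where p: "p = (a,j)" by (cases p)
  obtain a' j' where q: "q = (a',j')" by (cases q)
  show "(kron A B ** \<gamma> ** kron C D)$p$q = 0$p$q"
    unfolding p q kron_sandwich_entry Eu_sandwich z by simp
qed

lemma a_cross_implies_b:
  assumes H: "hermitian \<gamma>" and W: "orth_proj W" and V: "orth_proj V"
    and z3: "\<gamma> ** kron W (perp V) = 0" and z4: "\<gamma> ** kron (perp W) V = 0"
    and c1: "\<And>Z. G_map \<gamma> (W ** Z ** perp W) = 0"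
    and c2: "\<And>Z. G_map \<gamma> (perp W ** Z ** W) = 0"
  shows "\<gamma> = kron W V ** \<gamma> ** kron W V + kron (perp W) (perp V) ** \<gamma> ** kron (perp W) (perp V)"
proof -
  let ?K1 = "kron W V" and ?K2 = "kron (perp W) (perp V)" and ?K3 = "kron W (perp V)" and ?K4 = "kron (perp W) V"
  have pW: "orth_proj (perp W)" and pV: "orth_proj (perp V)" using W V by (simp_all add: orth_proj_perp)
  have one: "mat 1 = ?K1 + ?K2 + ?K3 + ?K4"
  proof -
    have "mat 1 = kron (W + perp W) (V + perp V)" by (simp add: perp_plus)
    then show ?thesis by (simp add: kron_add_left kron_add_right algebra_simps)
  qed
  have y3: "?K3 ** \<gamma> = 0"
    using z3 herm_cadj[OF H] orth_projD(2)[OF orth_proj_kron[OF W pV]] cadj_mult by (metis cadj_zero)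
  have y4: "?K4 ** \<gamma> = 0"
    using z4 herm_cadj[OF H] orth_projD(2)[OF orth_proj_kron[OF pW V]] cadj_mult by (metis cadj_zero)
  have r: "\<gamma> = \<gamma> ** ?K1 + \<gamma> ** ?K2"
  proof -
    have "\<gamma> = \<gamma> ** mat 1" by simp
    also have "... = \<gamma> ** ?K1 + \<gamma> ** ?K2" unfolding one by (simp add: matrix_add_ldistrib z3 z4)
    finally show ?thesis .
  qed
  have l: "\<gamma> = ?K1 ** \<gamma> + ?K2 ** \<gamma>"
  proof -
    have "\<gamma> = mat 1 ** \<gamma>" by simp
    also have "... = ?K1 ** \<gamma> + ?K2 ** \<gamma>" unfolding one by (simp add: matrix_add_rdistrib y3 y4)
    finally show ?thesis .
  qed
  have x12: "?K1 ** \<gamma> ** ?K2 = 0" by (rule cross_zero) (rule c2)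
  have x21: "?K2 ** \<gamma> ** ?K1 = 0" by (rule cross_zero) (rule c1)
  have "\<gamma> = (?K1 ** \<gamma> + ?K2 ** \<gamma>) ** ?K1 + (?K1 ** \<gamma> + ?K2 ** \<gamma>) ** ?K2"
    using r l by metis
  also have "... = ?K1 ** \<gamma> ** ?K1 + ?K2 ** \<gamma> ** ?K2"
    by (simp add: matrix_add_rdistrib x12 x21)
  finally show ?thesis .
qed



definition csub :: "(complex^'n::finite) set \<Rightarrow> bool" where
  "csub S \<longleftrightarrow> 0 \<in> S \<and> (\<forall>x\<in>S. \<forall>y\<in>S. x + y \<in> S) \<and> (\<forall>x\<in>S. \<forall>c. c *s x \<in> S)"

lemma scaleR_cs: "c *\<^sub>R (x::complex^'n) = (complex_of_real c) *s x"
  unfolding vec_eq_iff vector_scaleR_component vector_scalar_mult_def by (simp add: scaleR_conv_of_real)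

lemma csub_subspace: "csub S \<Longrightarrow> subspace S"
  unfolding csub_def subspace_def by (simp add: scaleR_cs)

lemma csub_sum: assumes "csub S" shows "finite I \<Longrightarrow> (\<forall>i\<in>I. f i \<in> S) \<Longrightarrow> (\<Sum>i\<in>I. f i) \<in> S"
  by (induct I rule: finite_induct) (use assms in \<open>auto simp: csub_def\<close>)

lemma inner_cs: "inner (c *s a) (b::complex^'n) = inner a (cnj c *s b)"
  by (simp add: inner_vec_def inner_complex_def algebra_simps)

lemma Re_cinner: "Re (cinner a b) = inner a b"
  by (simp add: cinner_def inner_vec_def inner_complex_def Re_sum)

lemma Im_cinner: "Im (cinner a b) = Re (cinner (\<i> *s a) b)"
  by (simp add: cinner_scale_left)

lemma vec_decomp: "(\<Sum>j\<in>UNIV. x$j *s axis j 1) = (x::complex^'n::finite)"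
  by (simp add: vec_eq_iff sum_component axis_def if_distrib if_distribR cong: if_cong)

lemma inner_self_eq0_vec: "inner (x::complex^'n::finite) x = 0 \<Longrightarrow> x = 0"
  by simp

lemma proj_exists:
  fixes S :: "(complex^'n::finite) set"
  assumes S: "csub S"
  shows "\<exists>V. orth_proj V \<and> (\<forall>y. V *v y \<in> S) \<and> (\<forall>x\<in>S. V *v x = x)"
proof -
  have sub: "subspace S" using S by (rule csub_subspace)
  have spanS: "span S = S" using sub by (rule span_eq_iff[THEN iffD2])
  define good where "good x y \<longleftrightarrow> y \<in> S \<and> (\<forall>w\<in>S. inner (x - y) w = 0)" for x y :: "complex^'n"
  have ex: "\<exists>y. good x y" for x
  proof -
    obtain y z where "y \<in> span S" "\<And>w. w \<in> span S \<Longrightarrow> orthogonal z w" "x = y + z"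
      using orthogonal_subspace_decomp_exists[of S x] by metis
    then show ?thesis unfolding good_def spanS orthogonal_def by (intro exI[of _ y]) auto
  qed
  have uniq: "y1 = y2" if "good x y1" "good x y2" for x y1 y2
  proof -
    have "y2 - y1 \<in> S" using that sub unfolding good_def by (simp add: subspace_diff)
    then have "inner (x - y1) (y2 - y1) - inner (x - y2) (y2 - y1) = 0" using that unfolding good_def by simp
    then have "inner (y2 - y1) (y2 - y1) = 0" by (simp add: inner_diff_left)
    then show ?thesis by simp
  qed
  define p where "p x = (SOME y. good x y)" for x
  have gp: "good x (p x)" for x unfolding p_def using ex by (rule someI_ex)
  define V where "V = (\<chi> i j. p (axis j 1) $ i)"
  have Vx: "V *v x = (\<Sum>j\<in>UNIV. x$j *s p (axis j 1))" for x
    by (simp add: V_def matrix_vector_mult_def vec_eq_iff sum_component mult.commute)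
  have goodV: "good x (V *v x)" for x
  proof -
    have inS: "V *v x \<in> S" unfolding Vx
      using S gp unfolding good_def csub_def by (intro csub_sum[OF S]) auto
    have "inner (x - V *v x) w = 0" if w: "w \<in> S" for w
    proof -
      have "x - V *v x = (\<Sum>j\<in>UNIV. x$j *s (axis j 1 - p (axis j 1)))"
        unfolding Vx by (subst (1) vec_decomp[symmetric]) (simp add: sum_subtractf vector_ssub_ldistrib)
      then have "inner (x - V *v x) w = (\<Sum>j\<in>UNIV. inner (axis j 1 - p (axis j 1)) (cnj (x$j) *s w))"
        by (simp only: inner_sum_left inner_cs)
      also have "... = 0"
        using gp w S unfolding good_def csub_def by (intro sum.neutral) auto
      finally show ?thesis .
    qed
    then show ?thesis unfolding good_def using inS by auto
  qed
  have inS: "V *v y \<in> S" for y using goodV unfolding good_def by simp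
  have fix_: "V *v x = x" if "x \<in> S" for x
    using uniq[OF goodV[of x], of x] that unfolding good_def by simp
  have idem: "V ** V = V"
    unfolding matrix_eq by (simp add: matrix_vector_mul_assoc[symmetric] fix_ inS)
  have reeq: "inner (V *v x) y = inner x (V *v y)" for x y
  proof -
    have "inner (y - V *v y) (V *v x) = 0" "inner (x - V *v x) (V *v y) = 0"
      using goodV inS unfolding good_def by auto
    then have "inner (V *v x) (y - V *v y) = 0" "inner (V *v y) (x - V *v x) = 0"
      by (simp_all add: inner_commute)
    then have "inner (V *v x) y = inner (V *v x) (V *v y)" "inner (V *v y) x = inner (V *v y) (V *v x)"
      by (simp_all add: inner_diff_right)
    then show ?thesis by (metis inner_commute)
  qed
  have ceq: "cinner (V *v x) y = cinner x (V *v y)" for x y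
  proof (rule complex_eqI)
    show "Re (cinner (V *v x) y) = Re (cinner x (V *v y))" by (simp add: Re_cinner reeq)
    have "Re (cinner (\<i> *s (V *v x)) y) = Re (cinner (\<i> *s x) (V *v y))"
      by (simp add: Re_cinner reeq flip: mv_scale)
    then show "Im (cinner (V *v x) y) = Im (cinner x (V *v y))" by (simp add: Im_cinner)
  qed
  have "V *v x = cadj V *v x" for x
  proof -
    have "cinner (V *v x) y = cinner (cadj V *v x) y" for y using ceq cinner_adj by metis
    then have "cinner (V *v x - cadj V *v x) (V *v x - cadj V *v x) = 0"
      by (simp add: cinner_diff_left)
    then show ?thesis by (simp add: cinner_self_eq0)
  qed
  then have "cadj V = V" by (simp add: matrix_eq)
  then have "orth_proj V" using idem by (simp add: orth_proj_def)
  then show ?thesis using inS fix_ by blast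
qed

lemma csub_range: "csub {y. \<exists>x. y = (A::'n::finite cmat) *v x}"
  unfolding csub_def
  by (auto intro: exI[of _ 0] simp: matrix_vector_right_distrib[symmetric] mv_scale[symmetric])

lemma csub_fix2: "csub {x. (U::'n::finite cmat) *v x = x \<and> (W::'n cmat) *v x = x}"
  unfolding csub_def by (auto simp: matrix_vector_right_distrib mv_scale)



abbreviation Tm where "Tm \<gamma> X \<equiv> F_map \<gamma> (G_map \<gamma> X)"

lemma T_add: "Tm \<gamma> (X + Y) = Tm \<gamma> X + Tm \<gamma> Y" by (simp add: G_add F_add)
lemma T_diff: "Tm \<gamma> (X - Y) = Tm \<gamma> X - Tm \<gamma> Y" by (simp add: G_diff F_diff)
lemma T_zero: "Tm \<gamma> 0 = 0" by simp
lemma T_sum: "finite I \<Longrightarrow> Tm \<gamma> (\<Sum>i\<in>I. X i) = (\<Sum>i\<in>I. Tm \<gamma> (X i))"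
  by (simp add: G_sum F_sum)

lemma exists_V:
  fixes \<gamma> :: "('a::finite\<times>'b::finite) cmat"
  assumes g: "psd \<gamma>" and P: "orth_proj P"
    and inv: "Tm \<gamma> P = P ** Tm \<gamma> P ** P"
  shows "\<exists>V. orth_proj V \<and> trace (\<gamma> ** kron P (perp V)) = 0 \<and> trace (\<gamma> ** kron (perp P) V) = 0"
proof -
  let ?A = "G_map \<gamma> P" and ?B = "G_map \<gamma> (perp P)"
  have pP: "orth_proj (perp P)" using P by (rule orth_proj_perp)
  have psA: "psd ?A" by (rule G_pos[OF g psd_proj[OF P]])
  have psB: "psd ?B" by (rule G_pos[OF g psd_proj[OF pP]])
  have "trace (?B ** ?A) = trace (perp P ** F_map \<gamma> ?A)" by (simp add: trace_G trace_F)
  also have "... = trace (perp P ** (P ** Tm \<gamma> P ** P))" using inv by simp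
  also have "... = 0" by (simp add: matrix_mul_assoc proj_perp2[OF P])
  finally have BA: "?A ** ?B = 0" "?B ** ?A = 0" using psd_trace_zero[OF psB psA] by auto
  obtain V where V: "orth_proj V" and VS: "\<And>y. V *v y \<in> {y. \<exists>x. y = ?A *v x}"
    and Vfix: "\<And>x. x \<in> {y. \<exists>x. y = ?A *v x} \<Longrightarrow> V *v x = x"
    using proj_exists[OF csub_range[of ?A]] by blast
  have VA: "V ** ?A = ?A" unfolding matrix_eq
    by (simp add: matrix_vector_mul_assoc[symmetric]) (blast intro: Vfix)
  have BV: "?B ** V = 0" unfolding matrix_eq
  proof
    fix y
    obtain x where "V *v y = ?A *v x" using VS[of y] by blast
    then show "(?B ** V) *v y = 0 *v y"
      by (simp add: matrix_vector_mul_assoc[symmetric] matrix_vector_mul_assoc BA)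
  qed
  have "trace (\<gamma> ** kron P (perp V)) = trace (?A ** perp V)" by (simp add: trace_G)
  also have "... = trace (perp V ** ?A)" by (rule trace_mul_sym)
  also have "... = 0" by (simp add: perp_def matrix_diff_rdistrib VA)
  finally have t1: "trace (\<gamma> ** kron P (perp V)) = 0" .
  have "trace (\<gamma> ** kron (perp P) V) = trace (?B ** V)" by (simp add: trace_G)
  then have t2: "trace (\<gamma> ** kron (perp P) V) = 0" using BV by simp
  show ?thesis using V t1 t2 by blast
qed

lemma inv_from_traces:
  fixes \<gamma> :: "('a::finite\<times>'b::finite) cmat"
  assumes g: "psd \<gamma>" and P: "orth_proj P" and V: "orth_proj V"
    and t1: "trace (\<gamma> ** kron P (perp V)) = 0" and t2: "trace (\<gamma> ** kron (perp P) V) = 0"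
  shows "Tm \<gamma> (P ** Z ** P) = P ** Tm \<gamma> (P ** Z ** P) ** P"
    "Tm \<gamma> (perp P ** Z ** perp P) = perp P ** Tm \<gamma> (perp P ** Z ** perp P) ** perp P"
proof -
  have pP: "orth_proj (perp P)" and pV: "orth_proj (perp V)" using P V by (simp_all add: orth_proj_perp)
  have H: "hermitian \<gamma>" using g by (rule psd_herm)
  have z1: "\<gamma> ** kron P (perp V) = 0" by (rule a_to_zero[OF g P pV t1])
  have z2: "\<gamma> ** kron (perp P) V = 0" by (rule a_to_zero[OF g pP V t2])
  show "Tm \<gamma> (P ** Z ** P) = P ** Tm \<gamma> (P ** Z ** P) ** P"
    by (rule invariance_from_a[OF H P V z1 z2])
  show "Tm \<gamma> (perp P ** Z ** perp P) = perp P ** Tm \<gamma> (perp P ** Z ** perp P) ** perp P"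
    by (rule invariance_from_a[OF H pP pV]) (simp_all add: z1 z2)
qed

lemma inv_corner_iff:
  assumes P: "orth_proj P"
  shows "invariant_corner (F_map \<gamma> \<circ> G_map \<gamma>) P \<longleftrightarrow> (\<forall>Z. Tm \<gamma> (P ** Z ** P) = P ** Tm \<gamma> (P ** Z ** P) ** P)"
  unfolding invariant_corner_def corner_iff[OF P, symmetric]
  by (auto simp: corner_def)

lemma T_image_corner_iff:
  assumes P: "orth_proj P"
  shows "(F_map \<gamma> \<circ> G_map \<gamma>) ` corner P P \<subseteq> corner P P \<longleftrightarrow> (\<forall>Z. Tm \<gamma> (P ** Z ** P) = P ** Tm \<gamma> (P ** Z ** P) ** P)"
  using inv_corner_iff[OF P] unfolding invariant_corner_def .

lemma proj_mul_self: "orth_proj P \<Longrightarrow> P ** P = P" by (rule orth_projD(1))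

lemma psd_sandwich: assumes A: "psd A" and P: "orth_proj P" shows "psd (P ** A ** P)"
proof -
  have HP: "hermitian P" using P by (rule orth_proj_herm)
  have h: "hermitian (P ** A ** P)" using psd_cadj[OF A] orth_projD(2)[OF P]
    by (simp add: hermitian_def cadj_mult matrix_mul_assoc)
  have "qf (P ** A ** P) x = qf A (P *v x)" for x
    unfolding qf_def by (simp add: matrix_vector_mul_assoc[symmetric] cinner_herm[OF HP])
  then show ?thesis unfolding psd_qf using h psd_Im[OF A] psd_Re[OF A] by simp
qed



lemma U_left: assumes U: "orth_proj U" and A: "A = U ** A ** U" shows "U ** A = A"
proof -
  have "U ** A = (U ** U) ** A ** U" using A by (metis matrix_mul_assoc)
  then show ?thesis using orth_projD(1)[OF U] A by simp
qed

lemma T_dec: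
  fixes \<gamma> :: "('a::finite\<times>'b::finite) cmat" and Ws :: "'a cmat list"
  assumes hp: "\<forall>i<length Ws. orth_proj (Ws!i)"
    and ho: "\<forall>i<length Ws. \<forall>j<length Ws. i \<noteq> j \<longrightarrow> Ws!i ** Ws!j = 0"
    and hr: "\<forall>X. (\<forall>i<length Ws. \<forall>Y\<in>corner (Ws!i) (Ws!i). tinner X Y = 0) \<longrightarrow> Tm \<gamma> X = 0"
  shows "Tm \<gamma> Z = (\<Sum>i<length Ws. Tm \<gamma> (Ws!i ** Z ** Ws!i))"
proof -
  let ?D = "Z - (\<Sum>i<length Ws. Ws!i ** Z ** Ws!i)"
  have "tinner ?D Y = 0" if j: "j < length Ws" and Y: "Y \<in> corner (Ws!j) (Ws!j)" for j Y
  proof -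
    let ?W = "Ws!j"
    have Wp: "orth_proj ?W" using hp j by blast
    have Yeq: "Y = ?W ** Y ** ?W" using corner_iff[OF Wp] Y by blast
    have CY: "cadj Y = ?W ** cadj Y ** ?W"
      using arg_cong[OF Yeq, of cadj] orth_projD(2)[OF Wp] by (simp add: cadj_mult matrix_mul_assoc)
    have trm: "trace ((Ws!i ** Z ** Ws!i) ** cadj Y) = (if i = j then trace (Z ** cadj Y) else 0)"
      if i: "i < length Ws" for i
    proof (cases "i = j")
      case True
      have "trace ((?W ** Z ** ?W) ** cadj Y) = trace (Z ** (?W ** cadj Y ** ?W))"
        by (metis matrix_mul_assoc trace_mul_sym)
      then show ?thesis using True CY by simp
    next
      case False
      have "(Ws!i ** Z ** Ws!i) ** cadj Y = (Ws!i ** Z) ** (Ws!i ** ?W) ** cadj Y ** ?W"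
        by (subst CY) (simp add: matrix_mul_assoc)
      then show ?thesis using False ho i j by simp
    qed
    have "tinner ?D Y = trace (Z ** cadj Y) - (\<Sum>i<length Ws. trace ((Ws!i ** Z ** Ws!i) ** cadj Y))"
      by (simp add: tinner_def matrix_diff_rdistrib trace_sub matrix_sum_rdistrib trace_sum)
    also have "(\<Sum>i<length Ws. trace ((Ws!i ** Z ** Ws!i) ** cadj Y)) = (\<Sum>i<length Ws. if i = j then trace (Z ** cadj Y) else 0)"
      using trm by (intro sum.cong) auto
    also have "... = trace (Z ** cadj Y)" using j by (simp add: sum.delta)
    finally show ?thesis by simp
  qed
  then have "Tm \<gamma> ?D = 0" using hr by blast
  then show ?thesis by (simp add: T_diff T_sum)
qed

lemma proj_norm_le:
  assumes P: "orth_proj P"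
  shows "Re (cinner (P *v y) (P *v y)) \<le> Re (cinner y y)"
proof -
  have HP: "hermitian P" using P by (rule orth_proj_herm)
  let ?z = "y - P *v y"
  have c1: "cinner (P *v y) ?z = 0"
  proof -
    have "cinner (P *v y) ?z = cinner y (P *v ?z)" by (rule cinner_herm[OF HP, symmetric])
    also have "P *v ?z = 0"
      by (simp add: matrix_vector_mult_diff_distrib matrix_vector_mul_assoc orth_projD(1)[OF P])
    finally show ?thesis by simp
  qed
  have c2: "cinner ?z (P *v y) = 0" using c1 cinner_cnj by (metis complex_cnj_zero)
  have "cinner y y = cinner (P *v y + ?z) (P *v y + ?z)" by simp
  also have "... = cinner (P *v y) (P *v y) + cinner ?z ?z"
    by (simp only: cinner_add_left cinner_add_right c1 c2) simp
  finally have "Re (cinner y y) = Re (cinner (P *v y) (P *v y)) + Re (cinner ?z ?z)" by simp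
  then show ?thesis using cinner_self_ge0[of ?z] by linarith
qed

lemma qf_diff_mat: "qf (A - B) x = qf A x - qf B x"
  by (simp add: qf_def matrix_vector_mult_diff_rdistrib cinner_diff_right)

lemma herm_diff: "hermitian A \<Longrightarrow> hermitian B \<Longrightarrow> hermitian (A - B)"
  by (simp add: hermitian_def cadj_diff)

lemma sub_block:
  fixes \<gamma> :: "('a::finite\<times>'b::finite) cmat" and Ws :: "'a cmat list"
  assumes g: "psd \<gamma>"
    and hp: "\<forall>i<length Ws. orth_proj (Ws!i)"
    and ho: "\<forall>i<length Ws. \<forall>j<length Ws. i \<noteq> j \<longrightarrow> Ws!i ** Ws!j = 0"
    and hr: "\<forall>X. (\<forall>i<length Ws. \<forall>Y\<in>corner (Ws!i) (Ws!i). tinner X Y = 0) \<longrightarrow> Tm \<gamma> X = 0"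
    and U: "orth_proj U" and inv: "Tm \<gamma> U = U ** Tm \<gamma> U ** U" and i: "i < length Ws"
  shows "Tm \<gamma> (Ws!i ** U ** Ws!i) = U ** Tm \<gamma> (Ws!i ** U ** Ws!i) ** U"
proof -
  let ?A = "\<lambda>j. Tm \<gamma> (Ws!j ** U ** Ws!j)"
  have psdA: "psd (?A j)" if "j < length Ws" for j
    using hp that by (intro F_pos[OF g] G_pos[OF g] psd_sandwich psd_proj U) auto
  have sumA: "Tm \<gamma> U = (\<Sum>j<length Ws. ?A j)" by (rule T_dec[OF hp ho hr])
  have kill: "?A i *v (perp U *v x) = 0" for x
  proof -
    let ?y = "perp U *v x"
    have Uy: "U *v ?y = 0" by (simp add: matrix_vector_mul_assoc proj_perp1[OF U])
    have "qf (Tm \<gamma> U) ?y = 0"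
    proof -
      have "Tm \<gamma> U *v ?y = (U ** Tm \<gamma> U ** U) *v ?y" using inv by simp
      also have "... = 0" by (simp add: matrix_vector_mul_assoc[symmetric] Uy)
      finally show ?thesis by (simp add: qf_def)
    qed
    then have "(\<Sum>j<length Ws. qf (?A j) ?y) = 0" using sumA by (simp add: qf_sum_mat)
    then have "(\<Sum>j<length Ws. Re (qf (?A j) ?y)) = 0" by (metis Re_sum zero_complex.sel(1))
    then have "\<forall>j\<in>{..<length Ws}. Re (qf (?A j) ?y) = 0"
      by (subst (asm) sum_nonneg_eq_0_iff) (auto intro: psd_Re[OF psdA])
    then have "Re (qf (?A i) ?y) = 0" using i by simp
    then have "qf (?A i) ?y = 0" using psd_Im[OF psdA[OF i]] by (simp add: complex_eq_iff)
    then show ?thesis by (rule psd_kernel[OF psdA[OF i]])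
  qed
  have r: "?A i ** perp U = 0" unfolding matrix_eq
    by (simp add: matrix_vector_mul_assoc[symmetric] kill)
  have "perp U ** ?A i = cadj (?A i ** perp U)"
    using psd_cadj[OF psdA[OF i]] orth_projD(2)[OF orth_proj_perp[OF U]] by (simp add: cadj_mult)
  then have l: "perp U ** ?A i = 0" using r by simp
  show ?thesis by (rule sandwich[OF r l])
qed



lemma block_cases:
  fixes \<gamma> :: "('a::finite\<times>'b::finite) cmat"
  assumes g: "psd \<gamma>" and Wi: "orth_proj Wi" and irr: "irreducible_on (F_map \<gamma> \<circ> G_map \<gamma>) Wi"
    and invWi: "\<forall>Z. Tm \<gamma> (Wi ** Z ** Wi) = Wi ** Tm \<gamma> (Wi ** Z ** Wi) ** Wi"
    and U: "orth_proj U" and subU: "Tm \<gamma> (Wi ** U ** Wi) = U ** Tm \<gamma> (Wi ** U ** Wi) ** U"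
  shows "U ** Wi = Wi \<or> Tm \<gamma> (Wi ** U ** Wi) = 0"
proof -
  let ?S = "{x. U *v x = x \<and> Wi *v x = x}"
  obtain PA where PA: "orth_proj PA" and PAS: "\<And>y. PA *v y \<in> ?S" and PAfix: "\<And>x. x \<in> ?S \<Longrightarrow> PA *v x = x"
    using proj_exists[OF csub_fix2[of U Wi]] by blast
  have UPA: "U ** PA = PA" unfolding matrix_eq using PAS by (simp add: matrix_vector_mul_assoc[symmetric])
  have WPA: "Wi ** PA = PA" unfolding matrix_eq using PAS by (simp add: matrix_vector_mul_assoc[symmetric])
  have PAU: "PA ** U = PA" using arg_cong[OF UPA, of cadj] orth_projD(2)[OF PA] orth_projD(2)[OF U]
    by (simp add: cadj_mult)
  have PAW: "PA ** Wi = PA" using arg_cong[OF WPA, of cadj] orth_projD(2)[OF PA] orth_projD(2)[OF Wi]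
    by (simp add: cadj_mult)
  let ?Q = "Wi ** U ** Wi"
  let ?A = "Tm \<gamma> ?Q"
  have psdQ: "psd ?Q" by (rule psd_sandwich[OF psd_proj[OF U] Wi])
  have psdA: "psd ?A" by (rule F_pos[OF g G_pos[OF g psdQ]])
  have AW: "?A = Wi ** ?A ** Wi" using invWi by blast
  have UA: "U ** ?A = ?A" by (rule U_left[OF U subU])
  have WA: "Wi ** ?A = ?A" by (rule U_left[OF Wi AW])
  have PAA: "PA ** ?A = ?A" unfolding matrix_eq
  proof
    fix x
    have "?A *v x \<in> ?S" using UA WA
      by (simp add: matrix_vector_mul_assoc)
    then show "(PA ** ?A) *v x = ?A *v x" by (simp add: matrix_vector_mul_assoc[symmetric] PAfix)
  qed
  have APA: "?A ** PA = ?A" using arg_cong[OF PAA, of cadj] orth_projD(2)[OF PA] psd_cadj[OF psdA]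
    by (simp add: cadj_mult)
  have AperpPA: "?A ** perp PA = 0" by (simp add: perp_def matrix_diff_ldistrib APA)
  have psdD: "psd (?Q - PA)"
  proof -
    have hQ: "hermitian ?Q" by (rule psd_herm[OF psdQ])
    have hPA: "hermitian PA" by (rule orth_proj_herm[OF PA])
    have HU: "hermitian U" and HW: "hermitian Wi" using U Wi by (simp_all add: orth_proj_herm)
    have "qf ?Q x = cinner (U *v (Wi *v x)) (U *v (Wi *v x))" for x
    proof -
      have e: "Wi ** U ** Wi = Wi ** (U ** (U ** Wi))" by (simp add: matrix_mul_assoc pidem[OF U])
      have "qf ?Q x = cinner x (Wi *v (U *v (U *v (Wi *v x))))"
        unfolding qf_def e by (simp add: matrix_vector_mul_assoc)
      also have "... = cinner (Wi *v x) (U *v (U *v (Wi *v x)))" by (rule cinner_herm[OF HW])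
      also have "... = cinner (U *v (Wi *v x)) (U *v (Wi *v x))" by (rule cinner_herm[OF HU])
      finally show ?thesis .
    qed
    moreover have "qf PA x = cinner (PA *v (U *v (Wi *v x))) (PA *v (U *v (Wi *v x)))" for x
    proof -
      have "qf PA x = cinner x (PA *v (PA *v x))"
        by (simp add: qf_def matrix_vector_mul_assoc orth_projD(1)[OF PA])
      also have "... = cinner (PA *v x) (PA *v x)" by (rule cinner_herm[OF hPA])
      also have "PA *v x = PA *v (U *v (Wi *v x))"
      proof -
        have e: "PA ** (U ** Wi) = PA" by (simp add: matrix_mul_assoc PAU PAW)
        show ?thesis by (simp add: matrix_vector_mul_assoc e)
      qed
      finally show ?thesis .
    qed
    ultimately have "qf (?Q - PA) x = cinner (U *v (Wi *v x)) (U *v (Wi *v x)) -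
        cinner (PA *v (U *v (Wi *v x))) (PA *v (U *v (Wi *v x)))" for x
      by (simp add: qf_diff_mat)
    then show ?thesis unfolding psd_qf
      using herm_diff[OF hQ hPA] proj_norm_le[OF PA] by simp
  qed
  have psdTD: "psd (?A - Tm \<gamma> PA)"
    using F_pos[OF g G_pos[OF g psdD]] by (simp add: G_diff F_diff)
  have psdTP: "psd (Tm \<gamma> PA)" by (rule F_pos[OF g G_pos[OF g psd_proj[OF PA]]])
  have killP: "Tm \<gamma> PA *v (perp PA *v x) = 0" for x
  proof -
    let ?y = "perp PA *v x"
    have "qf ?A ?y = 0"
      by (simp add: qf_def matrix_vector_mul_assoc AperpPA)
    then have "0 \<le> - Re (qf (Tm \<gamma> PA) ?y)" using psd_Re[OF psdTD, of ?y] by (simp add: qf_diff_mat)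
    then have "Re (qf (Tm \<gamma> PA) ?y) = 0" using psd_Re[OF psdTP, of ?y] by linarith
    then have "qf (Tm \<gamma> PA) ?y = 0" using psd_Im[OF psdTP] by (simp add: complex_eq_iff)
    then show ?thesis by (rule psd_kernel[OF psdTP])
  qed
  have r: "Tm \<gamma> PA ** perp PA = 0" unfolding matrix_eq
    by (simp add: matrix_vector_mul_assoc[symmetric] killP)
  have "perp PA ** Tm \<gamma> PA = cadj (Tm \<gamma> PA ** perp PA)"
    using psd_cadj[OF psdTP] orth_projD(2)[OF orth_proj_perp[OF PA]] by (simp add: cadj_mult)
  then have l: "perp PA ** Tm \<gamma> PA = 0" using r by simp
  have invPA: "Tm \<gamma> PA = PA ** Tm \<gamma> PA ** PA" by (rule sandwich[OF r l])
  obtain V where V: "orth_proj V" and t1: "trace (\<gamma> ** kron PA (perp V)) = 0"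
    and t2: "trace (\<gamma> ** kron (perp PA) V) = 0"
    using exists_V[OF g PA invPA] by blast
  have "\<forall>Z. Tm \<gamma> (PA ** Z ** PA) = PA ** Tm \<gamma> (PA ** Z ** PA) ** PA"
    using inv_from_traces(1)[OF g PA V t1 t2] by blast
  then have imgPA: "(F_map \<gamma> \<circ> G_map \<gamma>) ` corner PA PA \<subseteq> corner PA PA"
    using T_image_corner_iff[OF PA] by blast
  have subc: "corner PA PA \<subseteq> corner Wi Wi"
  proof
    fix X assume "X \<in> corner PA PA"
    then obtain Y where "X = PA ** Y ** PA" unfolding corner_def by blast
    then have "X = Wi ** (PA ** Y ** PA) ** Wi"
      by (metis PAW WPA matrix_mul_assoc)
    then show "X \<in> corner Wi Wi" unfolding corner_def by blast
  qed
  have "PA = 0 \<or> PA = Wi" using irr PA subc imgPA unfolding irreducible_on_def by blast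
  then show ?thesis
  proof
    assume "PA = 0"
    then show ?thesis using PAA by simp
  next
    assume "PA = Wi"
    then show ?thesis using UPA by simp
  qed
qed

lemma cross_T_zero:
  fixes \<gamma> :: "('a::finite\<times>'b::finite) cmat" and Ws :: "'a cmat list"
  assumes g: "psd \<gamma>"
    and hp: "\<forall>i<length Ws. orth_proj (Ws!i)"
    and ho: "\<forall>i<length Ws. \<forall>j<length Ws. i \<noteq> j \<longrightarrow> Ws!i ** Ws!j = 0"
    and hr: "\<forall>X. (\<forall>i<length Ws. \<forall>Y\<in>corner (Ws!i) (Ws!i). tinner X Y = 0) \<longrightarrow> Tm \<gamma> X = 0"
    and hinv: "\<forall>i<length Ws. invariant_corner (F_map \<gamma> \<circ> G_map \<gamma>) (Ws!i)"
    and hirr: "\<forall>i<length Ws. irreducible_on (F_map \<gamma> \<circ> G_map \<gamma>) (Ws!i)"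
    and W: "orth_proj W"
    and invW: "\<forall>Z. Tm \<gamma> (W ** Z ** W) = W ** Tm \<gamma> (W ** Z ** W) ** W"
    and invWp: "\<forall>Z. Tm \<gamma> (perp W ** Z ** perp W) = perp W ** Tm \<gamma> (perp W ** Z ** perp W) ** perp W"
  shows "Tm \<gamma> (W ** Z ** perp W) = 0"
proof -
  have pW: "orth_proj (perp W)" using W by (rule orth_proj_perp)
  have H: "hermitian \<gamma>" using g by (rule psd_herm)
  have iW: "Tm \<gamma> W = W ** Tm \<gamma> W ** W" using invW[rule_format, of "mat 1"] orth_projD(1)[OF W] by simp
  have iWp: "Tm \<gamma> (perp W) = perp W ** Tm \<gamma> (perp W) ** perp W"
    using invWp[rule_format, of "mat 1"] orth_projD(1)[OF pW] by simp
  have each: "Tm \<gamma> (Ws!i ** (W ** Z ** perp W) ** Ws!i) = 0" if i: "i < length Ws" for i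
  proof -
    let ?Wi = "Ws!i"
    have Wi: "orth_proj ?Wi" using hp i by blast
    have invWi: "\<forall>Z. Tm \<gamma> (?Wi ** Z ** ?Wi) = ?Wi ** Tm \<gamma> (?Wi ** Z ** ?Wi) ** ?Wi"
      using hinv i inv_corner_iff[OF Wi] by blast
    have irr: "irreducible_on (F_map \<gamma> \<circ> G_map \<gamma>) ?Wi" using hirr i by blast
    have c1: "W ** ?Wi = ?Wi \<or> Tm \<gamma> (?Wi ** W ** ?Wi) = 0"
      by (rule block_cases[OF g Wi irr invWi W sub_block[OF g hp ho hr W iW i]])
    have c2: "perp W ** ?Wi = ?Wi \<or> Tm \<gamma> (?Wi ** perp W ** ?Wi) = 0"
      by (rule block_cases[OF g Wi irr invWi pW sub_block[OF g hp ho hr pW iWp i]])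
    show ?thesis
    proof (cases "W ** ?Wi = ?Wi")
      case True
      then have "perp W ** ?Wi = 0" by (simp add: perp_def matrix_diff_rdistrib)
      then show ?thesis by (simp add: matrix_mul_assoc[symmetric])
    next
      case nW: False
      show ?thesis
      proof (cases "perp W ** ?Wi = ?Wi")
        case True
        then have "W ** ?Wi = 0" by (metis matrix_mul_assoc proj_perp1[OF W] times0_left)
        then have "?Wi ** W = 0" using arg_cong[of _ _ cadj] orth_projD(2)[OF W] orth_projD(2)[OF Wi]
          by (metis cadj_mult cadj_zero)
        then show ?thesis by (simp add: matrix_mul_assoc)
      next
        case False
        then have z1: "Tm \<gamma> (?Wi ** W ** ?Wi) = 0" and z2: "Tm \<gamma> (?Wi ** perp W ** ?Wi) = 0"
          using c1 c2 nW by auto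
        have e: "?Wi ** W ** ?Wi + ?Wi ** perp W ** ?Wi = ?Wi"
          by (simp only: matrix_add_rdistrib[symmetric] matrix_add_ldistrib[symmetric] perp_plus
              matrix_mul_rid orth_projD(1)[OF Wi])
        have "Tm \<gamma> (?Wi ** W ** ?Wi + ?Wi ** perp W ** ?Wi) = 0"
          by (simp only: T_add z1 z2) simp
        then have "Tm \<gamma> ?Wi = 0" by (simp only: e)
        then have GW: "G_map \<gamma> ?Wi = 0" by (rule T_zero_G[OF H])
        have "trace (\<gamma> ** kron ?Wi (mat 1)) = 0" using trace_G[of \<gamma> ?Wi "mat 1"] GW by simp
        then have zz: "\<gamma> ** kron ?Wi (mat 1) = 0" by (rule a_to_zero[OF g Wi orth_proj_1])
        have "G_map \<gamma> (?Wi ** M ** ?Wi) = 0" for M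
        proof (rule mat_eq_zero_trace)
          fix Y :: "'b cmat"
          have "trace (G_map \<gamma> (?Wi ** M ** ?Wi) ** Y) = trace (\<gamma> ** kron (?Wi ** (M ** ?Wi)) (mat 1 ** Y))"
            by (simp add: trace_G matrix_mul_assoc)
          then show "trace (G_map \<gamma> (?Wi ** M ** ?Wi) ** Y) = 0"
            using KZ2(1)[OF H Wi orth_proj_1 zz] by simp
        qed
        then show ?thesis by simp
      qed
    qed
  qed
  have "Tm \<gamma> (W ** Z ** perp W) = (\<Sum>i<length Ws. Tm \<gamma> (Ws!i ** (W ** Z ** perp W) ** Ws!i))"
    by (rule T_dec[OF hp ho hr])
  also have "... = 0" using each by simp
  finally show ?thesis .
qed



lemma claimC:
  fixes \<gamma> :: "('a::finite\<times>'b::finite) cmat"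
  assumes g: "psd \<gamma>"
    and Hyp: "\<forall>(W::'a cmat) (V::'b cmat). orth_proj W \<and> orth_proj V \<longrightarrow>
       ((trace (\<gamma> ** kron W (perp V)) = 0 \<and> trace (\<gamma> ** kron (perp W) V) = 0)
        \<longleftrightarrow> \<gamma> = kron W V ** \<gamma> ** kron W V + kron (perp W) (perp V) ** \<gamma> ** kron (perp W) (perp V))"
    and W: "orth_proj W" and invW: "\<forall>Z. Tm \<gamma> (W ** Z ** W) = W ** Tm \<gamma> (W ** Z ** W) ** W"
  shows "\<forall>Z. Tm \<gamma> (W ** Z ** perp W) = 0"
    "\<forall>Z. Tm \<gamma> (perp W ** Z ** perp W) = perp W ** Tm \<gamma> (perp W ** Z ** perp W) ** perp W"
proof -
  have iW: "Tm \<gamma> W = W ** Tm \<gamma> W ** W" using invW[rule_format, of "mat 1"] orth_projD(1)[OF W] by simp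
  obtain V where V: "orth_proj V" and t1: "trace (\<gamma> ** kron W (perp V)) = 0"
    and t2: "trace (\<gamma> ** kron (perp W) V) = 0"
    using exists_V[OF g W iW] by blast
  have b: "\<gamma> = kron W V ** \<gamma> ** kron W V + kron (perp W) (perp V) ** \<gamma> ** kron (perp W) (perp V)"
    using Hyp W V t1 t2 by blast
  show "\<forall>Z. Tm \<gamma> (W ** Z ** perp W) = 0"
    using b_implies_cross[OF W V b] by simp
  show "\<forall>Z. Tm \<gamma> (perp W ** Z ** perp W) = perp W ** Tm \<gamma> (perp W ** Z ** perp W) ** perp W"
    using inv_from_traces(2)[OF g W V t1 t2] by blast
qed

lemma dim_less:
  fixes A B :: "'n::finite cmat"
  assumes A: "orth_proj A" and B: "orth_proj B" and BA: "B ** A = A" and ne: "A \<noteq> B"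
  shows "dim {x. A *v x = x} < dim {x. B *v x = x}"
proof -
  have cA: "csub {x. A *v x = x}" using csub_fix2[of A A] by simp
  have cB: "csub {x. B *v x = x}" using csub_fix2[of B B] by simp
  have sA: "subspace {x. A *v x = x}" by (rule csub_subspace[OF cA])
  have sB: "subspace {x. B *v x = x}" by (rule csub_subspace[OF cB])
  have sub: "{x. A *v x = x} \<subseteq> {x. B *v x = x}"
  proof
    fix x assume "x \<in> {x. A *v x = x}"
    then have "A *v x = x" by simp
    then have "B *v x = (B ** A) *v x" by (metis matrix_vector_mul_assoc)
    then show "x \<in> {x. B *v x = x}" using BA \<open>A *v x = x\<close> by simp
  qed
  have neq: "{x. A *v x = x} \<noteq> {x. B *v x = x}"
  proof
    assume eq: "{x. A *v x = x} = {x. B *v x = x}"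
    have "B *v (B *v y) = B *v y" for y using orth_projD(1)[OF B] by (simp add: matrix_vector_mul_assoc)
    then have "A *v (B *v y) = B *v y" for y using eq by blast
    then have AB: "A ** B = B" unfolding matrix_eq by (simp add: matrix_vector_mul_assoc)
    have "A ** B = cadj (B ** A)" using orth_projD(2)[OF A] orth_projD(2)[OF B] by (simp add: cadj_mult)
    then have "A ** B = A" using BA orth_projD(2)[OF A] by simp
    then show False using AB ne by simp
  qed
  have e1: "span {x. A *v x = x} = {x. A *v x = x}" using sA by (rule span_eq_iff[THEN iffD2])
  have e2: "span {x. B *v x = x} = {x. B *v x = x}" using sB by (rule span_eq_iff[THEN iffD2])
  have "span {x. A *v x = x} \<subset> span {x. B *v x = x}"
    unfolding e1 e2 using sub neq by (rule psubsetI)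
  then show ?thesis by (rule dim_psubset)
qed

lemma decomp:
  fixes \<gamma> :: "('a::finite\<times>'b::finite) cmat"
  assumes g: "psd \<gamma>"
    and C2: "\<forall>W. orth_proj W \<and> (\<forall>Z. Tm \<gamma> (W ** Z ** W) = W ** Tm \<gamma> (W ** Z ** W) ** W) \<longrightarrow>
         (\<forall>Z. Tm \<gamma> (perp W ** Z ** perp W) = perp W ** Tm \<gamma> (perp W ** Z ** perp W) ** perp W)"
  shows "orth_proj U \<Longrightarrow> (\<forall>Z. Tm \<gamma> (U ** Z ** U) = U ** Tm \<gamma> (U ** Z ** U) ** U) \<Longrightarrow>
    \<exists>Ws. (\<forall>i<length Ws. orth_proj (Ws!i) \<and> U ** Ws!i = Ws!i \<and>
            invariant_corner (F_map \<gamma> \<circ> G_map \<gamma>) (Ws!i) \<and> irreducible_on (F_map \<gamma> \<circ> G_map \<gamma>) (Ws!i)) \<and>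
         (\<forall>i<length Ws. \<forall>j<length Ws. i \<noteq> j \<longrightarrow> Ws!i ** Ws!j = 0) \<and> sum_list Ws = U"
proof (induct "dim {x. U *v x = x}" arbitrary: U rule: less_induct)
  case less
  note U = less.prems(1) and invU = less.prems(2)
  show ?case
  proof (cases "irreducible_on (F_map \<gamma> \<circ> G_map \<gamma>) U")
    case True
    have "invariant_corner (F_map \<gamma> \<circ> G_map \<gamma>) U" using inv_corner_iff[OF U] invU by blast
    then show ?thesis using True U orth_projD(1)[OF U]
      by (intro exI[of _ "[U]"]) auto
  next
    case False
    then obtain W' where W': "orth_proj W'" and sub: "corner W' W' \<subseteq> corner U U"
      and img: "(F_map \<gamma> \<circ> G_map \<gamma>) ` corner W' W' \<subseteq> corner W' W'" and ne0: "W' \<noteq> 0" and neU: "W' \<noteq> U"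
      unfolding irreducible_on_def by blast
    have invW': "\<forall>Z. Tm \<gamma> (W' ** Z ** W') = W' ** Tm \<gamma> (W' ** Z ** W') ** W'"
      using T_image_corner_iff[OF W'] img by blast
    have "W' \<in> corner W' W'" unfolding corner_def using orth_projD(1)[OF W']
      by (intro CollectI exI[of _ W']) simp
    then have "W' = U ** W' ** U" using sub corner_iff[OF U] by blast
    then have UW: "U ** W' = W'" by (rule U_left[OF U])
    have WU: "W' ** U = W'" using arg_cong[OF UW, of cadj] orth_projD(2)[OF U] orth_projD(2)[OF W']
      by (simp add: cadj_mult)
    define R where "R = U - W'"
    have WW: "W' ** W' = W'" and UU: "U ** U = U" using W' U by (simp_all add: orth_projD(1))
    have UR: "U ** R = R" and RU: "R ** U = R" and WR: "W' ** R = 0" and RW: "R ** W' = 0"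
      unfolding R_def by (simp_all add: matrix_diff_ldistrib matrix_diff_rdistrib UW WU WW UU)
    have R: "orth_proj R"
      unfolding orth_proj_def R_def
      by (simp add: matrix_diff_ldistrib matrix_diff_rdistrib UW WU WW UU cadj_diff orth_projD(2)[OF U] orth_projD(2)[OF W'])
    have R1: "R = U ** perp W'" and R2: "R = perp W' ** U"
      unfolding R_def perp_def by (simp_all add: matrix_diff_ldistrib matrix_diff_rdistrib UW WU)
    have invR: "\<forall>Z. Tm \<gamma> (R ** Z ** R) = R ** Tm \<gamma> (R ** Z ** R) ** R"
    proof
      fix Z
      let ?X = "Tm \<gamma> (R ** Z ** R)"
      have e1: "R ** Z ** R = U ** (R ** Z ** R) ** U" by (metis UR RU matrix_mul_assoc)
      have e2: "R ** Z ** R = perp W' ** (R ** Z ** R) ** perp W'"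
        by (metis R1 R2 matrix_mul_assoc orth_projD(1)[OF orth_proj_perp[OF W']])
      have x1: "?X = U ** ?X ** U" using invU e1 by metis
      have x2: "?X = perp W' ** ?X ** perp W'"
        using C2 W' invW' e2 by metis
      have "R ** ?X ** R = U ** (perp W' ** ?X ** perp W') ** U"
        by (metis R1 R2 matrix_mul_assoc)
      then show "?X = R ** ?X ** R" using x1 x2 by metis
    qed
    have d1: "dim {x. W' *v x = x} < dim {x. U *v x = x}" by (rule dim_less[OF W' U UW neU])
    have WRU: "W' = U - R" unfolding R_def by simp
    have "R \<noteq> U"
    proof
      assume "R = U" then have "W' = 0" using WRU by simp
      then show False using ne0 by simp
    qed
    then have d2: "dim {x. R *v x = x} < dim {x. U *v x = x}" by (rule dim_less[OF R U UR])
    obtain Ws1 where P1: "\<forall>i<length Ws1. orth_proj (Ws1!i) \<and> W' ** Ws1!i = Ws1!i \<and>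
            invariant_corner (F_map \<gamma> \<circ> G_map \<gamma>) (Ws1!i) \<and> irreducible_on (F_map \<gamma> \<circ> G_map \<gamma>) (Ws1!i)"
      and O1: "\<forall>i<length Ws1. \<forall>j<length Ws1. i \<noteq> j \<longrightarrow> Ws1!i ** Ws1!j = 0" and S1: "sum_list Ws1 = W'"
      using less.hyps[OF d1 W' invW'] by blast
    obtain Ws2 where P2: "\<forall>i<length Ws2. orth_proj (Ws2!i) \<and> R ** Ws2!i = Ws2!i \<and>
            invariant_corner (F_map \<gamma> \<circ> G_map \<gamma>) (Ws2!i) \<and> irreducible_on (F_map \<gamma> \<circ> G_map \<gamma>) (Ws2!i)"
      and O2: "\<forall>i<length Ws2. \<forall>j<length Ws2. i \<noteq> j \<longrightarrow> Ws2!i ** Ws2!j = 0" and S2: "sum_list Ws2 = R"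
      using less.hyps[OF d2 R invR] by blast
    have cross: "A ** B = 0 \<and> B ** A = 0" if A: "A \<in> set Ws1" and B: "B \<in> set Ws2" for A B
    proof -
      obtain i where i: "i < length Ws1" "A = Ws1!i" using A by (metis in_set_conv_nth)
      obtain j where j: "j < length Ws2" "B = Ws2!j" using B by (metis in_set_conv_nth)
      have WA: "W' ** A = A" and pA: "orth_proj A" using P1 i by auto
      have RB: "R ** B = B" and pB: "orth_proj B" using P2 j by auto
      have AW: "A ** W' = A" using arg_cong[OF WA, of cadj] orth_projD(2)[OF W'] orth_projD(2)[OF pA]
        by (simp add: cadj_mult)
      have BR: "B ** R = B" using arg_cong[OF RB, of cadj] orth_projD(2)[OF R] orth_projD(2)[OF pB]
        by (simp add: cadj_mult)
      have "A ** B = A ** (W' ** R) ** B" by (metis AW RB matrix_mul_assoc)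
      moreover have "B ** A = B ** (R ** W') ** A" by (metis BR WA matrix_mul_assoc)
      ultimately show ?thesis using WR RW by simp
    qed
    let ?Ws = "Ws1 @ Ws2"
    have Pall: "\<forall>i<length ?Ws. orth_proj (?Ws!i) \<and> U ** ?Ws!i = ?Ws!i \<and>
            invariant_corner (F_map \<gamma> \<circ> G_map \<gamma>) (?Ws!i) \<and> irreducible_on (F_map \<gamma> \<circ> G_map \<gamma>) (?Ws!i)"
    proof (intro allI impI)
      fix i assume i: "i < length ?Ws"
      show "orth_proj (?Ws!i) \<and> U ** ?Ws!i = ?Ws!i \<and>
            invariant_corner (F_map \<gamma> \<circ> G_map \<gamma>) (?Ws!i) \<and> irreducible_on (F_map \<gamma> \<circ> G_map \<gamma>) (?Ws!i)"
      proof (cases "i < length Ws1")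
        case True
        have "W' ** Ws1!i = Ws1!i" using P1 True by simp
        then have "U ** Ws1!i = Ws1!i" using UW by (metis matrix_mul_assoc)
        then show ?thesis using P1 True by (simp add: nth_append)
      next
        case False
        let ?k = "i - length Ws1"
        have k: "?k < length Ws2" using i False by simp
        have "R ** Ws2!?k = Ws2!?k" using P2 k by simp
        then have "U ** Ws2!?k = Ws2!?k" using UR by (metis matrix_mul_assoc)
        then show ?thesis using P2 k False by (simp add: nth_append)
      qed
    qed
    have Oall: "\<forall>i<length ?Ws. \<forall>j<length ?Ws. i \<noteq> j \<longrightarrow> ?Ws!i ** ?Ws!j = 0"
    proof (intro allI impI)
      fix i j assume i: "i < length ?Ws" and j: "j < length ?Ws" and ij: "i \<noteq> j"
      show "?Ws!i ** ?Ws!j = 0"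
      proof (cases "i < length Ws1")
        case ti: True
        show ?thesis
        proof (cases "j < length Ws1")
          case True then show ?thesis using ti O1 ij by (simp add: nth_append)
        next
          case False
          then have "Ws2!(j - length Ws1) \<in> set Ws2" using j by simp
          moreover have "Ws1!i \<in> set Ws1" using ti by simp
          ultimately show ?thesis using cross ti False by (simp add: nth_append)
        qed
      next
        case fi: False
        show ?thesis
        proof (cases "j < length Ws1")
          case True
          have "Ws2!(i - length Ws1) \<in> set Ws2" using i fi by simp
          moreover have "Ws1!j \<in> set Ws1" using True by simp
          ultimately show ?thesis using cross fi True by (simp add: nth_append)
        next
          case False
          have "i - length Ws1 \<noteq> j - length Ws1" using ij fi False by simp
          then show ?thesis using O2 i j fi False by (simp add: nth_append)
        qed
      qed
    qed
    have "sum_list ?Ws = U" using S1 S2 unfolding R_def by simp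
    then show ?thesis using Pall Oall by blast
  qed
qed



lemma diag_zero:
  assumes W: "orth_proj W" and t: "tinner X (W ** X ** W) = 0"
  shows "W ** X ** W = 0"
proof -
  have cA: "cadj (W ** X ** W) = W ** cadj X ** W"
    using orth_projD(2)[OF W] by (simp add: cadj_mult matrix_mul_assoc)
  have e1: "W ** X ** W ** (W ** cadj X ** W) = W ** (X ** (W ** cadj X ** W))"
    by (simp add: matrix_mul_assoc pidem[OF W])
  have e2: "(X ** (W ** cadj X ** W)) ** W = X ** (W ** cadj X ** W)"
    by (simp add: matrix_mul_assoc pidem[OF W])
  have "tinner (W ** X ** W) (W ** X ** W) = trace (W ** (X ** (W ** cadj X ** W)))"
    unfolding tinner_def cA e1 ..
  also have "... = trace ((X ** (W ** cadj X ** W)) ** W)" by (rule trace_mul_sym)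
  also have "... = tinner X (W ** X ** W)" unfolding e2 tinner_def cA ..
  finally show ?thesis using t tinner_self_zero by simp
qed

lemma CR_condition:
  fixes \<gamma> :: "('a::finite\<times>'b::finite) cmat" and Ws :: "'a cmat list"
  assumes C1: "\<forall>W. orth_proj W \<and> (\<forall>Z. Tm \<gamma> (W ** Z ** W) = W ** Tm \<gamma> (W ** Z ** W) ** W) \<longrightarrow>
         (\<forall>Z. Tm \<gamma> (W ** Z ** perp W) = 0)"
    and P: "\<forall>i<length Ws. orth_proj (Ws!i) \<and> invariant_corner (F_map \<gamma> \<circ> G_map \<gamma>) (Ws!i)"
    and O: "\<forall>i<length Ws. \<forall>j<length Ws. i \<noteq> j \<longrightarrow> Ws!i ** Ws!j = 0"
    and S: "sum_list Ws = mat 1"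
  shows "\<forall>X. (\<forall>i<length Ws. \<forall>Y\<in>corner (Ws!i) (Ws!i). tinner X Y = 0) \<longrightarrow> (F_map \<gamma> \<circ> G_map \<gamma>) X = 0"
proof (intro allI impI)
  fix X assume hx: "\<forall>i<length Ws. \<forall>Y\<in>corner (Ws!i) (Ws!i). tinner X Y = 0"
  let ?n = "length Ws"
  have S': "(\<Sum>i<?n. Ws!i) = mat 1" using S by (simp add: sum_list_sum_nth atLeast0LessThan)
  have "X = (\<Sum>i<?n. Ws!i) ** X ** (\<Sum>j<?n. Ws!j)" using S' by simp
  also have "... = (\<Sum>i<?n. \<Sum>j<?n. Ws!i ** X ** Ws!j)"
    by (simp add: matrix_sum_rdistrib matrix_sum_ldistrib) (rule sum.swap)
  finally have Xd: "X = (\<Sum>i<?n. \<Sum>j<?n. Ws!i ** X ** Ws!j)" .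
  have each: "Tm \<gamma> (Ws!i ** X ** Ws!j) = 0" if i: "i < ?n" and j: "j < ?n" for i j
  proof (cases "i = j")
    case True
    have Wi: "orth_proj (Ws!i)" using P i by blast
    have "tinner X (Ws!i ** X ** Ws!i) = 0" using hx i corner_mem by blast
    then have "Ws!i ** X ** Ws!i = 0" by (rule diag_zero[OF Wi])
    then show ?thesis using True by simp
  next
    case False
    have Wi: "orth_proj (Ws!i)" using P i by blast
    have invi: "\<forall>Z. Tm \<gamma> (Ws!i ** Z ** Ws!i) = Ws!i ** Tm \<gamma> (Ws!i ** Z ** Ws!i) ** Ws!i"
      using P i inv_corner_iff[OF Wi] by blast
    have "Ws!j ** Ws!i = 0" using O i j False by auto
    then have "Ws!j ** perp (Ws!i) = Ws!j" by (simp add: perp_def matrix_diff_ldistrib)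
    then have "Ws!i ** X ** Ws!j = Ws!i ** (X ** Ws!j) ** perp (Ws!i)" by (metis matrix_mul_assoc)
    then show ?thesis using C1 Wi invi by metis
  qed
  have "Tm \<gamma> X = (\<Sum>i<?n. \<Sum>j<?n. Tm \<gamma> (Ws!i ** X ** Ws!j))"
    by (subst Xd) (simp add: T_sum)
  also have "... = 0" using each by simp
  finally show "(F_map \<gamma> \<circ> G_map \<gamma>) X = 0" by simp
qed

theorem mainTheorem5:
  fixes \<gamma> :: "('k::finite \<times> 'm::finite) cmat"
  assumes "is_state \<gamma>"
  shows "\<gamma> \<in> CR \<longleftrightarrow>
    (\<forall>(W::'k cmat) (V::'m cmat). orth_proj W \<and> orth_proj V \<longrightarrow>
       ((trace (\<gamma> ** kron W (perp V)) = 0 \<and> trace (\<gamma> ** kron (perp W) V) = 0)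
        \<longleftrightarrow>
        \<gamma> = kron W V ** \<gamma> ** kron W V + kron (perp W) (perp V) ** \<gamma> ** kron (perp W) (perp V)))"
proof -
  have g: "psd \<gamma>" using assms by (simp add: is_state_def)
  have H: "hermitian \<gamma>" using g by (rule psd_herm)
  show ?thesis
  proof
    assume "\<gamma> \<in> CR"
    then obtain Ws :: "'k cmat list" where
      hp: "\<forall>i<length Ws. orth_proj (Ws!i)"
      and ho: "\<forall>i<length Ws. \<forall>j<length Ws. i \<noteq> j \<longrightarrow> Ws!i ** Ws!j = 0"
      and hii: "\<forall>i<length Ws. invariant_corner (F_map \<gamma> \<circ> G_map \<gamma>) (Ws!i) \<and> irreducible_on (F_map \<gamma> \<circ> G_map \<gamma>) (Ws!i)"
      and hr0: "\<forall>X. (\<forall>i<length Ws. \<forall>Y\<in>corner (Ws!i) (Ws!i). tinner X Y = 0) \<longrightarrow> (F_map \<gamma> \<circ> G_map \<gamma>) X = 0"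
      unfolding CR_def completely_reducible_def by blast
    have hr: "\<forall>X. (\<forall>i<length Ws. \<forall>Y\<in>corner (Ws!i) (Ws!i). tinner X Y = 0) \<longrightarrow> Tm \<gamma> X = 0"
      using hr0 by simp
    have hinv: "\<forall>i<length Ws. invariant_corner (F_map \<gamma> \<circ> G_map \<gamma>) (Ws!i)" using hii by blast
    have hirr: "\<forall>i<length Ws. irreducible_on (F_map \<gamma> \<circ> G_map \<gamma>) (Ws!i)" using hii by blast
    show "\<forall>(W::'k cmat) (V::'m cmat). orth_proj W \<and> orth_proj V \<longrightarrow>
       ((trace (\<gamma> ** kron W (perp V)) = 0 \<and> trace (\<gamma> ** kron (perp W) V) = 0)
        \<longleftrightarrow>
        \<gamma> = kron W V ** \<gamma> ** kron W V + kron (perp W) (perp V) ** \<gamma> ** kron (perp W) (perp V))"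
    proof (intro allI impI)
      fix W :: "'k cmat" and V :: "'m cmat"
      assume WV: "orth_proj W \<and> orth_proj V"
      then have W: "orth_proj W" and V: "orth_proj V" by auto
      have pW: "orth_proj (perp W)" and pV: "orth_proj (perp V)" using W V by (simp_all add: orth_proj_perp)
      show "(trace (\<gamma> ** kron W (perp V)) = 0 \<and> trace (\<gamma> ** kron (perp W) V) = 0)
        \<longleftrightarrow> \<gamma> = kron W V ** \<gamma> ** kron W V + kron (perp W) (perp V) ** \<gamma> ** kron (perp W) (perp V)"
      proof
        assume a: "trace (\<gamma> ** kron W (perp V)) = 0 \<and> trace (\<gamma> ** kron (perp W) V) = 0"
        then have t1: "trace (\<gamma> ** kron W (perp V)) = 0" and t2: "trace (\<gamma> ** kron (perp W) V) = 0" by auto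
        have z3: "\<gamma> ** kron W (perp V) = 0" by (rule a_to_zero[OF g W pV t1])
        have z4: "\<gamma> ** kron (perp W) V = 0" by (rule a_to_zero[OF g pW V t2])
        have invW: "\<forall>Z. Tm \<gamma> (W ** Z ** W) = W ** Tm \<gamma> (W ** Z ** W) ** W"
          using inv_from_traces(1)[OF g W V t1 t2] by blast
        have invWp: "\<forall>Z. Tm \<gamma> (perp W ** Z ** perp W) = perp W ** Tm \<gamma> (perp W ** Z ** perp W) ** perp W"
          using inv_from_traces(2)[OF g W V t1 t2] by blast
        have c1: "G_map \<gamma> (W ** Z ** perp W) = 0" for Z
          using cross_T_zero[OF g hp ho hr hinv hirr W invW invWp] T_zero_G[OF H] by blast
        have invWp': "\<forall>Z. Tm \<gamma> (perp (perp W) ** Z ** perp (perp W)) = perp (perp W) ** Tm \<gamma> (perp (perp W) ** Z ** perp (perp W)) ** perp (perp W)"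
          using invW by simp
        have c2: "G_map \<gamma> (perp W ** Z ** W) = 0" for Z
          using cross_T_zero[OF g hp ho hr hinv hirr pW invWp invWp'] T_zero_G[OF H] by simp
        show "\<gamma> = kron W V ** \<gamma> ** kron W V + kron (perp W) (perp V) ** \<gamma> ** kron (perp W) (perp V)"
          by (rule a_cross_implies_b[OF H W V z3 z4 c1 c2])
      next
        assume b: "\<gamma> = kron W V ** \<gamma> ** kron W V + kron (perp W) (perp V) ** \<gamma> ** kron (perp W) (perp V)"
        show "trace (\<gamma> ** kron W (perp V)) = 0 \<and> trace (\<gamma> ** kron (perp W) V) = 0"
          by (rule b_implies_a[OF W V b])
      qed
    qed
  next
    assume Hyp: "\<forall>(W::'k cmat) (V::'m cmat). orth_proj W \<and> orth_proj V \<longrightarrow>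
       ((trace (\<gamma> ** kron W (perp V)) = 0 \<and> trace (\<gamma> ** kron (perp W) V) = 0)
        \<longleftrightarrow>
        \<gamma> = kron W V ** \<gamma> ** kron W V + kron (perp W) (perp V) ** \<gamma> ** kron (perp W) (perp V))"
    have C1: "\<forall>W. orth_proj W \<and> (\<forall>Z. Tm \<gamma> (W ** Z ** W) = W ** Tm \<gamma> (W ** Z ** W) ** W) \<longrightarrow>
         (\<forall>Z. Tm \<gamma> (W ** Z ** perp W) = 0)"
      using claimC(1)[OF g Hyp] by blast
    have C2: "\<forall>W. orth_proj W \<and> (\<forall>Z. Tm \<gamma> (W ** Z ** W) = W ** Tm \<gamma> (W ** Z ** W) ** W) \<longrightarrow>
         (\<forall>Z. Tm \<gamma> (perp W ** Z ** perp W) = perp W ** Tm \<gamma> (perp W ** Z ** perp W) ** perp W)"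
      using claimC(2)[OF g Hyp] by blast
    have inv1: "\<forall>Z. Tm \<gamma> (mat 1 ** Z ** mat 1) = mat 1 ** Tm \<gamma> (mat 1 ** Z ** mat 1) ** mat 1" by simp
    obtain Ws :: "'k cmat list" where
      P: "\<forall>i<length Ws. orth_proj (Ws!i) \<and> mat 1 ** Ws!i = Ws!i \<and>
            invariant_corner (F_map \<gamma> \<circ> G_map \<gamma>) (Ws!i) \<and> irreducible_on (F_map \<gamma> \<circ> G_map \<gamma>) (Ws!i)"
      and O: "\<forall>i<length Ws. \<forall>j<length Ws. i \<noteq> j \<longrightarrow> Ws!i ** Ws!j = 0" and S: "sum_list Ws = mat 1"
      using decomp[OF g C2 orth_proj_1 inv1] by blast
    have P': "\<forall>i<length Ws. orth_proj (Ws!i) \<and> invariant_corner (F_map \<gamma> \<circ> G_map \<gamma>) (Ws!i)"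
      using P by blast
    have R: "\<forall>X. (\<forall>i<length Ws. \<forall>Y\<in>corner (Ws!i) (Ws!i). tinner X Y = 0) \<longrightarrow> (F_map \<gamma> \<circ> G_map \<gamma>) X = 0"
      by (rule CR_condition[OF C1 P' O S])
    have "completely_reducible (F_map \<gamma> \<circ> G_map \<gamma>)"
      unfolding completely_reducible_def
      using selfadj_T[OF H] positive_T[OF g] P O R by blast
    then show "\<gamma> \<in> CR" unfolding CR_def using assms by blast
  qed
qed


end
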